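(* Let $d$ be even and let $k$ be a number of colors with $k < \frac{11}{6}d$ (and $k$ large enough that the colorings below exist). Let $\mathcal{C}^*=\{(G_i,\sigma_i,\tau_i)\}_{1\le i\le 4}$ be the four neighboring coloring pairs described in the context. Then there is no choice of flip probabilities $\{p_\alpha\}_{\alpha\in\mathbb{N}}$ and no one-step coupling $(\sigma,\tau)\mapsto(\sigma',\tau')$ of the flip dynamics with these flip probabilities such that $\mathbb{E}[d(\sigma',\tau')-1]<0$ holds for all $(G,\sigma,\tau)\in\mathcal{C}^*$, where $d(\cdot,\cdot)$ is Hamming distance.
   Context: For a graph $G=(V,E)$ and a coloring $\sigma:V\to[k]$ (not necessarily proper), a vertex $v$ and a color $c$, let $S_\sigma(v,c)$ be the set of vertices $w$ reachable from $v$ by a path whose vertices alternate between colors $\sigma(v)$ and $c$ (with $S_\sigma(v,\sigma(v))=\emptyset$); flipping it swaps colors $\sigma(v)$ and $c$ on it. Given flip probabilities $\{p_\alpha\}\subset[0,1]$, the flip dynamics picks a uniformly random vertex $v$ and uniformly random color $c\in[k]$, and flips $S_\sigma(v,c)$ with probability $p_\alpha/\alpha$ where $\alpha=|S_\sigma(v,c)|$. A one-step coupling is any joint distribution of $(\sigma',\tau')$ where $\sigma'$ (resp. $\tau'$) is distributed as one step of the flip dynamics from $\sigma$ (resp. $\tau$). The Hamming distance $d(\sigma,\tau)$ is the number of vertices where $\sigma,\tau$ differ. A neighboring coloring pair $(G,\sigma,\tau)$ consists of a graph and two colorings differing at exactly one vertex $v$. The family $\mathcal{C}^*$: $G_1$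 is the tree of height two rooted at $v$, where $v$ has exactly $d$ children $u_1,\dots,u_d$ and each $u_i$ has exactly two children $w^i_1,w^i_2$. In $\sigma_1,\tau_1$ (which differ only at $v$, with $\sigma_1(v)\ne\tau_1(v)$), $u_{2j-1}$ and $u_{2j}$ get color $c_j$ for $j=1,\dots,d/2$, where the $c_j$ are distinct colors different from $\sigma_1(v),\tau_1(v)$, and every $w^i_\ell$ gets color $\sigma_1(v)$. For $a=2,3,4$, $G_a$ is the tree rooted at $v$ consisting of $d$ disjoint paths, each with $a$ vertices, each attached to $v$ at one endpoint; let $u_1,\dots,u_d$ be the neighbors of $v$. In $\sigma_a,\tau_a$ (differing only at $v$, with $\sigma_a(v)\neq\tau_a(v)$), each $u_i$ gets a distinct color $c_i$ different from $\sigma_a(v),\tau_a(v)$, every descendant of $u_i$ at odd distance from $v$ gets $c_i$, and every other descendant of $v$ gets color $\sigma_a(v)$. *)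

theory Defs
  imports "HOL-Probability.Probability"
begin

text \<open>A graph is given by a finite vertex set V and a symmetric edge relation E.
  Colorings are functions into nat; the colour set [k] is {0..<k}.
  Only values on V are relevant.\<close>

inductive kempe_reach :: "'v set \<Rightarrow> ('v \<Rightarrow> 'v \<Rightarrow> bool) \<Rightarrow> ('v \<Rightarrow> nat) \<Rightarrow> nat \<Rightarrow> 'v \<Rightarrow> 'v \<Rightarrow> bool"
  for V E \<sigma> c v where
  base: "v \<in> V \<Longrightarrow> kempe_reach V E \<sigma> c v v"
| step: "kempe_reach V E \<sigma> c v w \<Longrightarrow> u \<in> V \<Longrightarrow> E w u \<Longrightarrow> \<sigma> u \<in> {\<sigma> v, c}
          \<Longrightarrow> \<sigma> u \<noteq> \<sigma> w \<Longrightarrow> kempe_reach V E \<sigma> c v u"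

text \<open>S_sigma(v,c): vertices reachable from v by a path alternating between colours sigma(v) and c.\<close>
definition kempe :: "'v set \<Rightarrow> ('v \<Rightarrow> 'v \<Rightarrow> bool) \<Rightarrow> ('v \<Rightarrow> nat) \<Rightarrow> 'v \<Rightarrow> nat \<Rightarrow> 'v set" where
  "kempe V E \<sigma> v c = (if c = \<sigma> v then {} else {w. kempe_reach V E \<sigma> c v w})"

definition flip_set :: "('v \<Rightarrow> nat) \<Rightarrow> 'v set \<Rightarrow> nat \<Rightarrow> nat \<Rightarrow> ('v \<Rightarrow> nat)" where
  "flip_set \<sigma> S a c = (\<lambda>w. if w \<in> S then (if \<sigma> w = a then c else if \<sigma> w = c then a else \<sigma> w) else \<sigma> w)"

definition flip_step :: "'v set \<Rightarrow> ('v \<Rightarrow> 'v \<Rightarrow> bool) \<Rightarrow> nat \<Rightarrow> (nat \<Rightarrow> real) \<Rightarrow> ('v \<Rightarrow> nat) \<Rightarrow> ('v \<Rightarrow> nat) pmf" where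
  "flip_step V E k p \<sigma> =
     do { v \<leftarrow> pmf_of_set V;
          c \<leftarrow> pmf_of_set {0..<k};
          let S = kempe V E \<sigma> v c;
          b \<leftarrow> bernoulli_pmf (p (card S) / real (card S));
          return_pmf (if b then flip_set \<sigma> S (\<sigma> v) c else \<sigma>) }"

definition hamming :: "'v set \<Rightarrow> ('v \<Rightarrow> nat) \<Rightarrow> ('v \<Rightarrow> nat) \<Rightarrow> nat" where
  "hamming V \<sigma> \<tau> = card {w \<in> V. \<sigma> w \<noteq> \<tau> w}"

definition contracting_coupling :: "'v set \<Rightarrow> ('v \<Rightarrow> 'v \<Rightarrow> bool) \<Rightarrow> nat \<Rightarrow> (nat \<Rightarrow> real)
     \<Rightarrow> ('v \<Rightarrow> nat) \<Rightarrow> ('v \<Rightarrow> nat) \<Rightarrow> bool" where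
  "contracting_coupling V E k p \<sigma> \<tau> =
     (\<exists>\<mu> :: (('v \<Rightarrow> nat) \<times> ('v \<Rightarrow> nat)) pmf.
        map_pmf fst \<mu> = flip_step V E k p \<sigma> \<and>
        map_pmf snd \<mu> = flip_step V E k p \<tau> \<and>
        measure_pmf.expectation \<mu> (\<lambda>(x, y). real (hamming V x y) - 1) < 0)"

text \<open>G_1: u_i = (i,1), its children w^i_1 = (i,2), w^i_2 = (i,3), for 1 <= i <= d.
  G_a: the i-th path is (i,1) - (i,2) - ... - (i,a), with (i,1) = u_i adjacent to the root.\<close>

definition root :: "nat \<times> nat" where "root = (0, 0)"

definition V1 :: "nat \<Rightarrow> (nat \<times> nat) set" where
  "V1 d = {root} \<union> {(i, j). 1 \<le> i \<and> i \<le> d \<and> 1 \<le> j \<and> j \<le> 3}"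

definition E1_base :: "nat \<Rightarrow> nat \<times> nat \<Rightarrow> nat \<times> nat \<Rightarrow> bool" where
  "E1_base d x y = (\<exists>i. 1 \<le> i \<and> i \<le> d \<and>
      ((x = root \<and> y = (i, 1)) \<or> (x = (i, 1) \<and> (y = (i, 2) \<or> y = (i, 3)))))"

definition E1 :: "nat \<Rightarrow> nat \<times> nat \<Rightarrow> nat \<times> nat \<Rightarrow> bool" where
  "E1 d x y = (E1_base d x y \<or> E1_base d y x)"

definition Vpath :: "nat \<Rightarrow> nat \<Rightarrow> (nat \<times> nat) set" where
  "Vpath d a = {root} \<union> {(i, j). 1 \<le> i \<and> i \<le> d \<and> 1 \<le> j \<and> j \<le> a}"

definition Epath_base :: "nat \<Rightarrow> nat \<Rightarrow> nat \<times> nat \<Rightarrow> nat \<times> nat \<Rightarrow> bool" where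
  "Epath_base d a x y = (\<exists>i. 1 \<le> i \<and> i \<le> d \<and>
      ((x = root \<and> y = (i, 1)) \<or> (\<exists>j. 1 \<le> j \<and> j < a \<and> x = (i, j) \<and> y = (i, j + 1))))"

definition Epath :: "nat \<Rightarrow> nat \<Rightarrow> nat \<times> nat \<Rightarrow> nat \<times> nat \<Rightarrow> bool" where
  "Epath d a x y = (Epath_base d a x y \<or> Epath_base d a y x)"

text \<open>Coloring of G_1 with root colour r (= sigma_1(v) or tau_1(v)), base colour s = sigma_1(v)
  for the leaves, and colour c_j on u_{2j-1}, u_{2j}.\<close>
definition col1 :: "nat \<Rightarrow> nat \<Rightarrow> (nat \<Rightarrow> nat) \<Rightarrow> nat \<times> nat \<Rightarrow> nat" where
  "col1 r s c x = (if x = root then r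
                   else if snd x = 1 then c ((fst x + 1) div 2) else s)"

definition colpath :: "nat \<Rightarrow> nat \<Rightarrow> (nat \<Rightarrow> nat) \<Rightarrow> nat \<times> nat \<Rightarrow> nat" where
  "colpath r s c x = (if x = root then r
                      else if odd (snd x) then c (fst x) else s)"

text \<open>Admissible colour choices: a = sigma(v), b = tau(v) distinct colours in [k];
  c_1..c_n distinct colours in [k] different from a and b.\<close>
definition valid_colors :: "nat \<Rightarrow> nat \<Rightarrow> nat \<Rightarrow> nat \<Rightarrow> (nat \<Rightarrow> nat) \<Rightarrow> bool" where
  "valid_colors k n a b c = (a < k \<and> b < k \<and> a \<noteq> b \<and> inj_on c {1..n} \<and>
      (\<forall>j\<in>{1..n}. c j < k \<and> c j \<noteq> a \<and> c j \<noteq> b))"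

end

theory Submission
  imports Defs
begin


lemma q_bounds:
  assumes "\<forall>\<alpha>. 0 \<le> p \<alpha> \<and> p \<alpha> \<le> (1::real)"
  shows "0 \<le> p n / real n \<and> p n / real n \<le> 1"
proof (cases "n = 0")
  case True then show ?thesis by simp
next
  case False
  then have "real n \<ge> 1" by simp
  have p: "0 \<le> p n" "p n \<le> 1" using assms by auto
  have "p n / real n \<le> p n / 1" by (rule divide_left_mono) (use p \<open>real n \<ge> 1\<close> in auto)
  then show ?thesis using p by auto
qed

lemma bern_exp:
  assumes "0 \<le> q" "q \<le> 1"
  shows "measure_pmf.expectation (bernoulli_pmf q \<bind> (\<lambda>b. return_pmf (if b then x else y))) (h :: _ \<Rightarrow> real)
     = q * h x + (1 - q) * h y"
  using assms by (simp add: map_pmf_def[symmetric])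

lemma flip_step_exp0:
  fixes h :: "('v \<Rightarrow> nat) \<Rightarrow> real"
  assumes "finite V" "V \<noteq> {}" "k > 0" "\<forall>\<alpha>. 0 \<le> p \<alpha> \<and> p \<alpha> \<le> 1"
  shows "measure_pmf.expectation (flip_step V E k p \<sigma>) h =
    (\<Sum>w\<in>V. \<Sum>c\<in>{0..<k}. (p (card (kempe V E \<sigma> w c)) / card (kempe V E \<sigma> w c)) *
        h (flip_set \<sigma> (kempe V E \<sigma> w c) (\<sigma> w) c)
      + (1 - p (card (kempe V E \<sigma> w c)) / card (kempe V E \<sigma> w c)) * h \<sigma>) / (card V * k)"
proof -
  have fin: "finite (set_pmf (bernoulli_pmf q \<bind> (\<lambda>b. return_pmf (f b))))" for q and f :: "bool \<Rightarrow> 'v \<Rightarrow> nat"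
    by (rule finite_subset[of _ "range f"]) auto
  have fin2: "finite (set_pmf (pmf_of_set {0..<k} \<bind> (\<lambda>c. bernoulli_pmf (q c) \<bind> (\<lambda>b. return_pmf (f c b)))))"
    for q and f :: "nat \<Rightarrow> bool \<Rightarrow> 'v \<Rightarrow> nat"
    using assms(3) by (rule_tac finite_subset[of _ "(\<lambda>(c,b). f c b) ` ({0..<k} \<times> UNIV)"]) (auto simp: set_pmf_of_set)
  show ?thesis
    unfolding flip_step_def Let_def
    apply (subst pmf_expectation_bind_pmf_of_set)
    using assms fin2 apply auto[3]
    apply (subst pmf_expectation_bind_pmf_of_set)
    using assms fin apply auto[3]
    using q_bounds[OF assms(4)]
    apply (simp add: bern_exp sum_divide_distrib[symmetric] sum_distrib_left field_simps)
    done
qed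

definition tm :: "'v set \<Rightarrow> ('v \<Rightarrow> 'v \<Rightarrow> bool) \<Rightarrow> (nat \<Rightarrow> real) \<Rightarrow> ('v \<Rightarrow> nat) \<Rightarrow> (('v \<Rightarrow> nat) \<Rightarrow> real) \<Rightarrow> 'v \<Rightarrow> nat \<Rightarrow> real" where
  "tm V E p \<sigma> h w c = p (card (kempe V E \<sigma> w c)) / card (kempe V E \<sigma> w c) *
      (h (flip_set \<sigma> (kempe V E \<sigma> w c) (\<sigma> w) c) - h \<sigma>)"

lemma flip_step_exp:
  fixes h :: "('v \<Rightarrow> nat) \<Rightarrow> real"
  assumes "finite V" "V \<noteq> {}" "k > 0" "\<forall>\<alpha>. 0 \<le> p \<alpha> \<and> p \<alpha> \<le> 1"
  shows "measure_pmf.expectation (flip_step V E k p \<sigma>) h =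
    h \<sigma> + (\<Sum>w\<in>V. \<Sum>c\<in>{0..<k}. tm V E p \<sigma> h w c) / (card V * k)"
proof -
  have "(\<Sum>w\<in>V. \<Sum>c\<in>{0..<k}. (p (card (kempe V E \<sigma> w c)) / card (kempe V E \<sigma> w c)) *
        h (flip_set \<sigma> (kempe V E \<sigma> w c) (\<sigma> w) c)
      + (1 - p (card (kempe V E \<sigma> w c)) / card (kempe V E \<sigma> w c)) * h \<sigma>)
    = (\<Sum>w\<in>V. \<Sum>c\<in>{0..<k}. h \<sigma> + tm V E p \<sigma> h w c)"
  proof -
    have *: "\<And>q a b::real. q*a + (1-q)*b = b + q*(a-b)" by (simp add: algebra_simps)
    show ?thesis unfolding tm_def * ..
  qed
  also have "\<dots> = real (card V * k) * h \<sigma> + (\<Sum>w\<in>V. \<Sum>c\<in>{0..<k}. tm V E p \<sigma> h w c)"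
    by (simp add: sum.distrib)
  finally show ?thesis
    using assms by (simp add: flip_step_exp0 add_divide_distrib)
qed

lemma coupling_lb:
  fixes h :: "('v \<Rightarrow> nat) \<Rightarrow> real"
  assumes "map_pmf fst \<mu> = P" "map_pmf snd \<mu> = Q" "finite (set_pmf P)" "finite (set_pmf Q)"
    "\<And>x y. h x - h y \<le> real (hamming V x y)"
  shows "measure_pmf.expectation P h - measure_pmf.expectation Q h - 1
     \<le> measure_pmf.expectation \<mu> (\<lambda>(x, y). real (hamming V x y) - 1)"
proof -
  have "set_pmf \<mu> \<subseteq> set_pmf P \<times> set_pmf Q"
    using assms(1,2) by (auto simp flip: assms(1,2) intro: rev_image_eqI)
  then have fin: "finite (set_pmf \<mu>)" using assms(3,4) finite_subset by blast
  have eP: "measure_pmf.expectation P h = measure_pmf.expectation \<mu> (\<lambda>z. h (fst z))"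
    using assms(1) by (metis integral_map_pmf)
  have eQ: "measure_pmf.expectation Q h = measure_pmf.expectation \<mu> (\<lambda>z. h (snd z))"
    using assms(2) by (metis integral_map_pmf)
  have "measure_pmf.expectation P h - measure_pmf.expectation Q h - 1 =
     measure_pmf.expectation \<mu> (\<lambda>z. h (fst z) - h (snd z) - 1)"
    unfolding eP eQ
    by (subst Bochner_Integration.integral_diff, auto intro: integrable_measure_pmf_finite[OF fin])+
  also have "\<dots> \<le> measure_pmf.expectation \<mu> (\<lambda>(x, y). real (hamming V x y) - 1)"
    by (rule integral_mono) (auto intro: integrable_measure_pmf_finite[OF fin] simp: assms(5) split: prod.splits)
  finally show ?thesis .
qed

lemma flip_step_finite:
  assumes "finite V" "V \<noteq> {}" "k > 0"
  shows "finite (set_pmf (flip_step V E k p \<sigma>))"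
  unfolding flip_step_def Let_def
  apply (rule finite_subset[of _ "{\<sigma>} \<union> (\<lambda>(w,c). flip_set \<sigma> (kempe V E \<sigma> w c) (\<sigma> w) c) ` (V \<times> {0..<k})"])
  using assms by (auto split: if_splits) (metis (no_types, lifting) SigmaI atLeastLessThan_iff case_prod_conv image_eqI zero_le)

lemma contracting_imp:
  fixes h :: "('v \<Rightarrow> nat) \<Rightarrow> real"
  assumes "contracting_coupling V E k p \<sigma> \<tau>"
    "finite V" "V \<noteq> {}" "k > 0" "\<forall>\<alpha>. 0 \<le> p \<alpha> \<and> p \<alpha> \<le> 1"
    "\<And>x y. h x - h y \<le> real (hamming V x y)"
    "h \<sigma> - h \<tau> = 1"
  shows "(\<Sum>w\<in>V. \<Sum>c\<in>{0..<k}. tm V E p \<sigma> h w c) - (\<Sum>w\<in>V. \<Sum>c\<in>{0..<k}. tm V E p \<tau> h w c) < 0"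
proof -
  obtain \<mu> where m: "map_pmf fst \<mu> = flip_step V E k p \<sigma>" "map_pmf snd \<mu> = flip_step V E k p \<tau>"
    "measure_pmf.expectation \<mu> (\<lambda>(x, y). real (hamming V x y) - 1) < 0"
    using assms(1) unfolding contracting_coupling_def by blast
  have "measure_pmf.expectation (flip_step V E k p \<sigma>) h - measure_pmf.expectation (flip_step V E k p \<tau>) h - 1 < 0"
    using coupling_lb[OF m(1,2) flip_step_finite[OF assms(2-4)] flip_step_finite[OF assms(2-4)] assms(6)] m(3) by linarith
  then have "((\<Sum>w\<in>V. \<Sum>c\<in>{0..<k}. tm V E p \<sigma> h w c) - (\<Sum>w\<in>V. \<Sum>c\<in>{0..<k}. tm V E p \<tau> h w c)) / (card V * k) < 0"
    using assms(7) by (simp add: flip_step_exp[OF assms(2-5)] diff_divide_distrib)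
  moreover have "real (card V * k) > 0" using assms(2-4) by (simp add: card_gt_0_iff)
  ultimately show ?thesis by (simp add: divide_less_0_iff)
qed

lemma kempe_single:
  assumes "w \<in> V" "c \<noteq> \<sigma> w" "\<And>y. y \<in> V \<Longrightarrow> E w y \<Longrightarrow> \<sigma> y \<noteq> c"
  shows "kempe V E \<sigma> w c = {w}"
proof -
  have "u = w" if "kempe_reach V E \<sigma> c w u" for u
    using that by induction (use assms in auto)
  then show ?thesis using assms(1,2) by (auto simp: kempe_def intro: kempe_reach.base)
qed

lemma kempe_eqI:
  assumes "w \<in> S" "c \<noteq> \<sigma> w"
    "\<And>x y. x \<in> S \<Longrightarrow> y \<in> V \<Longrightarrow> E x y \<Longrightarrow> \<sigma> y \<in> {\<sigma> w, c} \<Longrightarrow> \<sigma> y \<noteq> \<sigma> x \<Longrightarrow> y \<in> S"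
    "\<And>y. y \<in> S \<Longrightarrow> kempe_reach V E \<sigma> c w y"
  shows "kempe V E \<sigma> w c = S"
proof -
  have "u \<in> S" if "kempe_reach V E \<sigma> c w u" for u
    using that
  proof induction
    case base then show ?case using assms(1) by simp
  next
    case (step x y) then show ?case using assms(3)[of x y] by simp
  qed
  then show ?thesis using assms(2,4) unfolding kempe_def by auto
qed

lemma kempe_self: "kempe V E \<sigma> w (\<sigma> w) = {}"
  by (simp add: kempe_def)

lemma tm_self: "tm V E p \<sigma> h w (\<sigma> w) = 0"
  by (simp add: tm_def kempe_self)

lemma hamming_sum:
  assumes "finite V" shows "real (hamming V x y) = (\<Sum>w\<in>V. of_bool (x w \<noteq> y w))"
proof -
  have "real (hamming V x y) = (\<Sum>w\<in>{w\<in>V. x w \<noteq> y w}. 1)" by (simp add: hamming_def)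
  also have "\<dots> = (\<Sum>w\<in>V. if x w \<noteq> y w then 1 else 0)" by (rule sum.inter_filter[OF assms])
  finally show ?thesis unfolding of_bool_def .
qed



lemma Vpath_eq: "Vpath d a = insert root ({1..d} \<times> {1..a})"
  by (auto simp: Vpath_def)

lemma root_notin: "root \<notin> {1..d} \<times> {1..a}"
  by (auto simp: root_def)

lemma Vpath_finite: "finite (Vpath d a)"
  by (simp add: Vpath_eq)

lemma Vpath_card: "card (Vpath d a) = 1 + d * a"
  unfolding Vpath_eq by (subst card_insert_disjoint[OF _ root_notin]) (auto simp: card_cartesian_product)

lemma sum_Vpath: "(\<Sum>w\<in>Vpath d a. f w) = f root + (\<Sum>i\<in>{1..d}. \<Sum>j\<in>{1..a}. f (i, j))"
proof -
  have "(\<Sum>i\<in>{1..d}. \<Sum>j\<in>{1..a}. f (i, j)) = (\<Sum>(i,j)\<in>{1..d}\<times>{1..a}. f (i, j))"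
    by (rule sum.cartesian_product)
  moreover have "sum f (insert root ({1..d}\<times>{1..a})) = f root + sum f ({1..d}\<times>{1..a})"
    using root_notin by (intro sum.insert) auto
  ultimately show ?thesis unfolding Vpath_eq by simp
qed

lemma root_in_Vpath[simp]: "root \<in> Vpath d a" by (simp add: Vpath_def)
lemma ij_in_Vpath[simp]: "(i, j) \<in> Vpath d a \<longleftrightarrow> (i, j) = root \<or> (1 \<le> i \<and> i \<le> d \<and> 1 \<le> j \<and> j \<le> a)"
  by (auto simp: Vpath_def)

lemma root_neq[simp]: "1 \<le> i \<Longrightarrow> (i, j) \<noteq> root" "1 \<le> i \<Longrightarrow> root \<noteq> (i, j)"
  by (auto simp: root_def)

lemma colpath_root[simp]: "colpath r s C root = r" by (simp add: colpath_def)
lemma colpath_ij[simp]: "1 \<le> i \<Longrightarrow> colpath r s C (i, j) = (if odd j then C i else s)"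
  unfolding colpath_def root_def by simp

lemma E2_root: "Epath d 2 root y \<longleftrightarrow> (\<exists>i. 1 \<le> i \<and> i \<le> d \<and> y = (i, 1))"
  unfolding Epath_def Epath_base_def root_def by auto
lemma E2_i1: "1 \<le> i \<Longrightarrow> i \<le> d \<Longrightarrow> Epath d 2 (i, 1) y \<longleftrightarrow> y = root \<or> y = (i, 2)"
  unfolding Epath_def Epath_base_def root_def by auto
lemma E2_i2: "1 \<le> i \<Longrightarrow> i \<le> d \<Longrightarrow> Epath d 2 (i, 2) y \<longleftrightarrow> y = (i, 1)"
  unfolding Epath_def Epath_base_def root_def by auto

lemmas E2_i1s = E2_i1[simplified]
lemmas E2_i2s = E2_i2[simplified]

lemma sum_12: "(\<Sum>j\<in>{1..2::nat}. g j) = g 1 + g 2"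
  by (simp add: numeral_2_eq_2)

lemma sum_two:
  fixes f :: "nat \<Rightarrow> real"
  assumes "s0 < k" "s1 < k" "s0 \<noteq> s1" "\<And>c. c < k \<Longrightarrow> c \<noteq> s0 \<Longrightarrow> c \<noteq> s1 \<Longrightarrow> f c = 0"
  shows "(\<Sum>c\<in>{0..<k}. f c) = f s0 + f s1"
proof -
  have "(\<Sum>c\<in>{0..<k}. f c) = (\<Sum>c\<in>{0..<k} - {s0, s1}. f c) + (\<Sum>c\<in>{s0, s1}. f c)"
    by (rule sum.subset_diff) (use assms in auto)
  also have "(\<Sum>c\<in>{0..<k} - {s0, s1}. f c) = 0"
    by (rule sum.neutral) (use assms in auto)
  finally show ?thesis using assms(3) by simp
qed

lemma sum_colors:
  fixes f :: "nat \<Rightarrow> real"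
  assumes "inj_on C I" "finite I" "\<And>i. i \<in> I \<Longrightarrow> C i < k \<and> C i \<noteq> s0 \<and> C i \<noteq> s1"
    "s0 < k" "s1 < k" "s0 \<noteq> s1"
    "f s0 = 0" "f s1 = \<gamma>" "\<And>i. i \<in> I \<Longrightarrow> f (C i) = \<alpha>"
    "\<And>c. c < k \<Longrightarrow> c \<noteq> s0 \<Longrightarrow> c \<noteq> s1 \<Longrightarrow> c \<notin> C ` I \<Longrightarrow> f c = \<beta>"
  shows "(\<Sum>c\<in>{0..<k}. f c) = real (card I) * \<alpha> + \<gamma> + (real k - 2 - real (card I)) * \<beta>"
proof -
  define R where "R = {0..<k} - {s0, s1} - C ` I"
  have sub1: "{s0, s1} \<subseteq> {0..<k}" using assms by auto
  have sub2: "C ` I \<subseteq> {0..<k} - {s0, s1}" using assms(3) by auto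
  have e1: "(\<Sum>c\<in>{0..<k}. f c) = (\<Sum>c\<in>{0..<k} - {s0, s1}. f c) + (\<Sum>c\<in>{s0, s1}. f c)"
    by (rule sum.subset_diff[OF sub1]) simp
  have e2: "(\<Sum>c\<in>{0..<k} - {s0, s1}. f c) = (\<Sum>c\<in>R. f c) + (\<Sum>c\<in>C ` I. f c)"
    unfolding R_def by (rule sum.subset_diff[OF sub2]) simp
  have "(\<Sum>c\<in>C ` I. f c) = (\<Sum>i\<in>I. f (C i))" by (rule sum.reindex[OF assms(1), unfolded comp_def])
  also have "\<dots> = real (card I) * \<alpha>" using assms(9) by simp
  finally have e3: "(\<Sum>c\<in>C ` I. f c) = real (card I) * \<alpha>" .
  have e4: "(\<Sum>c\<in>R. f c) = real (card R) * \<beta>"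
    using assms(10) by (simp add: R_def)
  have cR0: "card R = k - 2 - card I"
  proof -
    have "card ({0..<k} - {s0, s1}) = k - 2" using sub1 assms(6) by (simp add: card_Diff_subset)
    moreover have "card (C ` I) = card I" using assms(1) by (simp add: card_image)
    ultimately show ?thesis unfolding R_def using sub2 by (simp add: card_Diff_subset[OF finite_imageI[OF assms(2)]])
  qed
  have le: "card I + 2 \<le> k"
  proof -
    have "card (C ` I) \<le> card ({0..<k} - {s0, s1})" by (rule card_mono[OF _ sub2]) simp
    then have "card I \<le> k - 2" using sub1 assms(1,6) by (simp add: card_Diff_subset card_image)
    moreover have k2: "2 \<le> k" using assms(4-6) by (cases "s0 < s1") auto
    ultimately show ?thesis by linarith
  qed
  have cR: "real (card R) = real k - 2 - real (card I)" using cR0 le by (simp add: of_nat_diff)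
  have e5: "(\<Sum>c\<in>{s0, s1}. f c) = \<gamma>" using assms(6,7,8) by simp
  show ?thesis unfolding e1 e2 e3 e4 e5 cR by (simp add: algebra_simps)
qed

lemma sum_inj_le1:
  assumes "inj_on C I" "finite I" "\<And>i. i \<in> I \<Longrightarrow> 0 \<le> g i \<and> g i \<le> 1"
  shows "(\<Sum>i\<in>I. of_bool (z = C i) * g i) \<le> (1::real)"
proof (cases "\<exists>i0\<in>I. C i0 = z")
  case True
  then obtain i0 where i0: "i0 \<in> I" "C i0 = z" by blast
  have "(\<Sum>i\<in>I. of_bool (z = C i) * g i) = of_bool (z = C i0) * g i0 + (\<Sum>i\<in>I - {i0}. of_bool (z = C i) * g i)"
    by (rule sum.remove[OF assms(2) i0(1)])
  also have "(\<Sum>i\<in>I - {i0}. of_bool (z = C i) * g i) = 0"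
  proof (rule sum.neutral, rule ballI)
    fix i assume i: "i \<in> I - {i0}"
    then have "C i \<noteq> C i0" using inj_on_eq_iff[OF assms(1), of i i0] i0(1) by auto
    then show "of_bool (z = C i) * g i = 0" using i0(2) by simp
  qed
  finally show ?thesis using assms(3)[OF i0(1)] i0(2) by simp
next
  case False
  then have "(\<Sum>i\<in>I. of_bool (z = C i) * g i) = 0" by (intro sum.neutral) auto
  then show ?thesis by simp
qed

definition psi2 :: "nat \<Rightarrow> (nat \<Rightarrow> nat) \<Rightarrow> (nat \<times> nat \<Rightarrow> nat) \<Rightarrow> nat \<Rightarrow> real" where
  "psi2 B C x i = of_bool (x (i, 1) = B) - of_bool (x (i, 2) = C i) + of_bool (x root = C i) * of_bool (x (i, 2) = C i)"

definition h2 :: "nat \<Rightarrow> nat \<Rightarrow> nat \<Rightarrow> (nat \<Rightarrow> nat) \<Rightarrow> (nat \<times> nat \<Rightarrow> nat) \<Rightarrow> real" where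
  "h2 d A B C x = of_bool (x root = A) + (\<Sum>i\<in>{1..d}. psi2 B C x i)"

locale cfg2 =
  fixes d k A B :: nat and C :: "nat \<Rightarrow> nat"
  assumes vc: "valid_colors k d A B C"
begin

lemma AB: "A < k" "B < k" "A \<noteq> B" "B \<noteq> A" using vc unfolding valid_colors_def by auto
lemma injC: "inj_on C {1..d}" using vc unfolding valid_colors_def by blast
lemma Cf: "1 \<le> i \<Longrightarrow> i \<le> d \<Longrightarrow> C i < k \<and> C i \<noteq> A \<and> C i \<noteq> B \<and> A \<noteq> C i \<and> B \<noteq> C i"
proof -
  assume "1 \<le> i" "i \<le> d"
  then have "i \<in> {1..d}" by simp
  then have "C i < k \<and> C i \<noteq> A \<and> C i \<noteq> B" using vc unfolding valid_colors_def by blast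
  then show ?thesis by metis
qed
lemma Cs[simp]: "Suc 0 \<le> i \<Longrightarrow> i \<le> d \<Longrightarrow> C i \<noteq> A" "Suc 0 \<le> i \<Longrightarrow> i \<le> d \<Longrightarrow> C i \<noteq> B"
  "Suc 0 \<le> i \<Longrightarrow> i \<le> d \<Longrightarrow> A \<noteq> C i" "Suc 0 \<le> i \<Longrightarrow> i \<le> d \<Longrightarrow> B \<noteq> C i"
  using Cf[of i] by (simp_all only: One_nat_def) blast+
lemma Ceq: "1 \<le> i \<Longrightarrow> i \<le> d \<Longrightarrow> 1 \<le> j \<Longrightarrow> j \<le> d \<Longrightarrow> C i = C j \<longleftrightarrow> i = j"
  by (rule inj_on_eq_iff[OF injC]) auto

abbreviation "\<sigma> \<equiv> colpath A A C"
abbreviation "\<tau> \<equiv> colpath B A C"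
abbreviation "V \<equiv> Vpath d 2"
abbreviation "E \<equiv> Epath d 2"
abbreviation "h \<equiv> h2 d A B C"

lemma h_block:
  assumes "1 \<le> i" "i \<le> d" "\<And>j. 1 \<le> j \<Longrightarrow> j \<le> d \<Longrightarrow> j \<noteq> i \<Longrightarrow> x (j, 1) \<noteq> B \<and> x (j, 2) \<noteq> C j"
  shows "h x = of_bool (x root = A) + psi2 B C x i"
proof -
  have "(\<Sum>j\<in>{1..d}. psi2 B C x j) = psi2 B C x i + (\<Sum>j\<in>{1..d} - {i}. psi2 B C x j)"
    by (rule sum.remove) (use assms in auto)
  also have "(\<Sum>j\<in>{1..d} - {i}. psi2 B C x j) = 0"
    by (rule sum.neutral) (use assms(3) in \<open>auto simp: psi2_def\<close>)
  finally show ?thesis by (simp add: h2_def)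
qed

lemma h_base:
  assumes "\<And>j. 1 \<le> j \<Longrightarrow> j \<le> d \<Longrightarrow> x (j, 1) \<noteq> B \<and> x (j, 2) \<noteq> C j"
  shows "h x = of_bool (x root = A)"
proof -
  have "(\<Sum>j\<in>{1..d}. psi2 B C x j) = 0"
    by (rule sum.neutral) (use assms in \<open>auto simp: psi2_def\<close>)
  then show ?thesis by (simp add: h2_def)
qed

lemma h_sigma: "h \<sigma> = 1" by (subst h_base) auto
lemma h_tau: "h \<tau> = 0" by (subst h_base) (auto simp: AB)


lemma inV: "1 \<le> i \<Longrightarrow> i \<le> d \<Longrightarrow> (i, 1) \<in> V" "1 \<le> i \<Longrightarrow> i \<le> d \<Longrightarrow> (i, 2) \<in> V"
  by auto

lemma nbr_root: "y \<in> V \<Longrightarrow> E root y \<Longrightarrow> \<exists>j. 1 \<le> j \<and> j \<le> d \<and> y = (j, 1)"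
  using E2_root by blast

lemma kS_root_C:
  assumes i: "1 \<le> i" "i \<le> d"
  shows "kempe V E \<sigma> root (C i) = {root, (i, 1), (i, 2)}"
proof (rule kempe_eqI)
  show "root \<in> {root, (i, 1), (i, 2)}" by simp
  show "C i \<noteq> \<sigma> root" using i by simp
next
  fix x y assume x: "x \<in> {root, (i, 1), (i, 2)}" and y: "y \<in> V" "E x y" "\<sigma> y \<in> {\<sigma> root, C i}" "\<sigma> y \<noteq> \<sigma> x"
  show "y \<in> {root, (i, 1), (i, 2)}"
  proof -
    { assume "x = root"
      then obtain j where j: "1 \<le> j" "j \<le> d" "y = (j, 1)" using nbr_root y by blast
      then have "C j = C i" using y(3) i by auto
      then have "j = i" using Ceq j i by blast
      then have ?thesis using j by simp }
    moreover { assume "x = (i, 1)" then have ?thesis using y(2) E2_i1[OF i] by auto }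
    moreover { assume "x = (i, 2)" then have ?thesis using y(2) E2_i2[OF i] by auto }
    ultimately show ?thesis using x by blast
  qed
next
  fix y :: "nat \<times> nat" assume "y \<in> {root, (i, 1), (i, 2)}"
  moreover have r0: "kempe_reach V E \<sigma> (C i) root root" by (rule kempe_reach.base) simp
  moreover have r1: "kempe_reach V E \<sigma> (C i) root (i, 1)"
    by (rule kempe_reach.step[OF r0]) (use i in \<open>auto simp: E2_root\<close>)
  moreover have r2: "kempe_reach V E \<sigma> (C i) root (i, 2)"
    by (rule kempe_reach.step[OF r1]) (use i in \<open>auto simp: E2_i1s\<close>)
  ultimately show "kempe_reach V E \<sigma> (C i) root y" by blast
qed


lemma kS_root_other:
  assumes "c \<noteq> A" "\<And>j. 1 \<le> j \<Longrightarrow> j \<le> d \<Longrightarrow> c \<noteq> C j"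
  shows "kempe V E \<sigma> root c = {root}"
proof (rule kempe_single)
  fix y assume "y \<in> V" "E root y"
  then obtain j where "1 \<le> j" "j \<le> d" "y = (j, 1)" using nbr_root by blast
  then show "\<sigma> y \<noteq> c" using assms(2) by auto
qed (use assms in auto)

lemma X_closed:
  assumes i: "1 \<le> i" "i \<le> d" and x: "x \<in> {root, (i, 1), (i, 2)}" and y: "y \<in> V" "E x y" "\<sigma> y \<in> {A, C i}"
  shows "y \<in> {root, (i, 1), (i, 2)}"
proof -
  { assume "x = root"
    then obtain j where j: "1 \<le> j" "j \<le> d" "y = (j, 1)" using nbr_root y by blast
    then have "C j = C i" using y(3) i by auto
    then have "j = i" using Ceq j i by blast
    then have ?thesis using j by simp }
  moreover { assume "x = (i, 1)" then have ?thesis using y(2) E2_i1[OF i] by auto }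
  moreover { assume "x = (i, 2)" then have ?thesis using y(2) E2_i2[OF i] by auto }
  ultimately show ?thesis using x by blast
qed

lemma kS_i1_A:
  assumes i: "1 \<le> i" "i \<le> d"
  shows "kempe V E \<sigma> (i, 1) A = {root, (i, 1), (i, 2)}"
proof (rule kempe_eqI)
  show "(i, 1) \<in> {root, (i, 1), (i, 2)}" by simp
  show "A \<noteq> \<sigma> (i, 1)" using i by simp
next
  fix x y assume a: "x \<in> {root, (i, 1), (i, 2)}" "y \<in> V" "E x y" "\<sigma> y \<in> {\<sigma> (i, 1), A}"
  have "\<sigma> y \<in> {A, C i}" using a(4) i by auto
  then show "y \<in> {root, (i, 1), (i, 2)}" using X_closed[OF i a(1-3)] by blast
next
  fix y :: "nat \<times> nat" assume "y \<in> {root, (i, 1), (i, 2)}"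
  moreover have r0: "kempe_reach V E \<sigma> A (i, 1) (i, 1)" by (rule kempe_reach.base) (use i in simp)
  moreover have r1: "kempe_reach V E \<sigma> A (i, 1) root"
    by (rule kempe_reach.step[OF r0]) (use i in \<open>auto simp: E2_i1s\<close>)
  moreover have r2: "kempe_reach V E \<sigma> A (i, 1) (i, 2)"
    by (rule kempe_reach.step[OF r0]) (use i in \<open>auto simp: E2_i1s\<close>)
  ultimately show "kempe_reach V E \<sigma> A (i, 1) y" by blast
qed

lemma kS_i1_other:
  assumes i: "1 \<le> i" "i \<le> d" and c: "c \<noteq> A" "c \<noteq> C i"
  shows "kempe V E \<sigma> (i, 1) c = {(i, 1)}"
proof (rule kempe_single)
  fix y assume "y \<in> V" "E (i, 1) y"
  then have "y = root \<or> y = (i, 2)" using E2_i1[OF i] by simp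
  then show "\<sigma> y \<noteq> c" using c i by auto
qed (use i c in auto)

lemma kS_i2_C:
  assumes i: "1 \<le> i" "i \<le> d"
  shows "kempe V E \<sigma> (i, 2) (C i) = {root, (i, 1), (i, 2)}"
proof (rule kempe_eqI)
  show "(i, 2) \<in> {root, (i, 1), (i, 2)}" by simp
  show "C i \<noteq> \<sigma> (i, 2)" using i by simp
next
  fix x y assume a: "x \<in> {root, (i, 1), (i, 2)}" "y \<in> V" "E x y" "\<sigma> y \<in> {\<sigma> (i, 2), C i}"
  have "\<sigma> y \<in> {A, C i}" using a(4) i by auto
  then show "y \<in> {root, (i, 1), (i, 2)}" using X_closed[OF i a(1-3)] by blast
next
  fix y :: "nat \<times> nat" assume "y \<in> {root, (i, 1), (i, 2)}"
  moreover have r0: "kempe_reach V E \<sigma> (C i) (i, 2) (i, 2)" by (rule kempe_reach.base) (use i in simp)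
  moreover have r1: "kempe_reach V E \<sigma> (C i) (i, 2) (i, 1)"
    by (rule kempe_reach.step[OF r0]) (use i in \<open>auto simp: E2_i2s\<close>)
  moreover have r2: "kempe_reach V E \<sigma> (C i) (i, 2) root"
    by (rule kempe_reach.step[OF r1]) (use i in \<open>auto simp: E2_i1s\<close>)
  ultimately show "kempe_reach V E \<sigma> (C i) (i, 2) y" by blast
qed

lemma kS_i2_other:
  assumes i: "1 \<le> i" "i \<le> d" and c: "c \<noteq> A" "c \<noteq> C i"
  shows "kempe V E \<sigma> (i, 2) c = {(i, 2)}"
proof (rule kempe_single)
  fix y assume "y \<in> V" "E (i, 2) y"
  then have "y = (i, 1)" using E2_i2[OF i] by simp
  then show "\<sigma> y \<noteq> c" using c i by auto
qed (use i c in auto)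

lemma kT_root_C:
  assumes i: "1 \<le> i" "i \<le> d"
  shows "kempe V E \<tau> root (C i) = {root, (i, 1)}"
proof (rule kempe_eqI)
  show "root \<in> {root, (i, 1)}" by simp
  show "C i \<noteq> \<tau> root" using i by simp
next
  fix x y assume x: "x \<in> {root, (i, 1)}" and y: "y \<in> V" "E x y" "\<tau> y \<in> {\<tau> root, C i}"
  show "y \<in> {root, (i, 1)}"
  proof -
    { assume "x = root"
      then obtain j where j: "1 \<le> j" "j \<le> d" "y = (j, 1)" using nbr_root y by blast
      then have "C j = C i" using y(3) i by auto
      then have "j = i" using Ceq j i by blast
      then have ?thesis using j by simp }
    moreover { assume "x = (i, 1)" then have ?thesis using y E2_i1[OF i] i AB by auto }
    ultimately show ?thesis using x by blast
  qed
next
  fix y :: "nat \<times> nat" assume "y \<in> {root, (i, 1)}"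
  moreover have r0: "kempe_reach V E \<tau> (C i) root root" by (rule kempe_reach.base) simp
  moreover have r1: "kempe_reach V E \<tau> (C i) root (i, 1)"
    by (rule kempe_reach.step[OF r0]) (use i in \<open>auto simp: E2_root\<close>)
  ultimately show "kempe_reach V E \<tau> (C i) root y" by blast
qed

lemma kT_root_other:
  assumes "c \<noteq> B" "\<And>j. 1 \<le> j \<Longrightarrow> j \<le> d \<Longrightarrow> c \<noteq> C j"
  shows "kempe V E \<tau> root c = {root}"
proof (rule kempe_single)
  fix y assume "y \<in> V" "E root y"
  then obtain j where "1 \<le> j" "j \<le> d" "y = (j, 1)" using nbr_root by blast
  then show "\<tau> y \<noteq> c" using assms(2) by auto
qed (use assms in auto)

lemma kT_i1_B:
  assumes i: "1 \<le> i" "i \<le> d"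
  shows "kempe V E \<tau> (i, 1) B = {root, (i, 1)}"
proof (rule kempe_eqI)
  show "(i, 1) \<in> {root, (i, 1)}" by simp
  show "B \<noteq> \<tau> (i, 1)" using i by simp
next
  fix x y assume x: "x \<in> {root, (i, 1)}" and y: "y \<in> V" "E x y" "\<tau> y \<in> {\<tau> (i, 1), B}"
  show "y \<in> {root, (i, 1)}"
  proof -
    { assume "x = root"
      then obtain j where j: "1 \<le> j" "j \<le> d" "y = (j, 1)" using nbr_root y by blast
      then have "C j = C i" using y(3) i by auto
      then have "j = i" using Ceq j i by blast
      then have ?thesis using j by simp }
    moreover { assume "x = (i, 1)" then have ?thesis using y E2_i1[OF i] i AB by auto }
    ultimately show ?thesis using x by blast
  qed
next
  fix y :: "nat \<times> nat" assume "y \<in> {root, (i, 1)}"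
  moreover have r0: "kempe_reach V E \<tau> B (i, 1) (i, 1)" by (rule kempe_reach.base) (use i in simp)
  moreover have r1: "kempe_reach V E \<tau> B (i, 1) root"
    by (rule kempe_reach.step[OF r0]) (use i in \<open>auto simp: E2_i1s\<close>)
  ultimately show "kempe_reach V E \<tau> B (i, 1) y" by blast
qed

lemma Y_closed:
  assumes i: "1 \<le> i" "i \<le> d" and x: "x \<in> {(i, 1), (i, 2)}" and y: "y \<in> V" "E x y" "\<tau> y \<in> {A, C i}"
  shows "y \<in> {(i, 1), (i, 2)}"
proof -
  { assume "x = (i, 1)" then have ?thesis using y E2_i1[OF i] AB Cf[OF i] by auto }
  moreover { assume "x = (i, 2)" then have ?thesis using y(2) E2_i2[OF i] by auto }
  ultimately show ?thesis using x by blast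
qed

lemma kT_i1_A:
  assumes i: "1 \<le> i" "i \<le> d"
  shows "kempe V E \<tau> (i, 1) A = {(i, 1), (i, 2)}"
proof (rule kempe_eqI)
  show "(i, 1) \<in> {(i, 1), (i, 2)}" by simp
  show "A \<noteq> \<tau> (i, 1)" using i by simp
next
  fix x y assume a: "x \<in> {(i, 1), (i, 2)}" "y \<in> V" "E x y" "\<tau> y \<in> {\<tau> (i, 1), A}"
  have "\<tau> y \<in> {A, C i}" using a(4) i by auto
  then show "y \<in> {(i, 1), (i, 2)}" using Y_closed[OF i a(1-3)] by blast
next
  fix y :: "nat \<times> nat" assume "y \<in> {(i, 1), (i, 2)}"
  moreover have r0: "kempe_reach V E \<tau> A (i, 1) (i, 1)" by (rule kempe_reach.base) (use i in simp)
  moreover have r1: "kempe_reach V E \<tau> A (i, 1) (i, 2)"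
    by (rule kempe_reach.step[OF r0]) (use i in \<open>auto simp: E2_i1s\<close>)
  ultimately show "kempe_reach V E \<tau> A (i, 1) y" by blast
qed

lemma kT_i1_other:
  assumes i: "1 \<le> i" "i \<le> d" and c: "c \<noteq> A" "c \<noteq> B" "c \<noteq> C i"
  shows "kempe V E \<tau> (i, 1) c = {(i, 1)}"
proof (rule kempe_single)
  fix y assume "y \<in> V" "E (i, 1) y"
  then have "y = root \<or> y = (i, 2)" using E2_i1[OF i] by simp
  then show "\<tau> y \<noteq> c" using c i by auto
qed (use i c in auto)

lemma kT_i2_C:
  assumes i: "1 \<le> i" "i \<le> d"
  shows "kempe V E \<tau> (i, 2) (C i) = {(i, 1), (i, 2)}"
proof (rule kempe_eqI)
  show "(i, 2) \<in> {(i, 1), (i, 2)}" by simp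
  show "C i \<noteq> \<tau> (i, 2)" using i by simp
next
  fix x y assume a: "x \<in> {(i, 1), (i, 2)}" "y \<in> V" "E x y" "\<tau> y \<in> {\<tau> (i, 2), C i}"
  have "\<tau> y \<in> {A, C i}" using a(4) i by auto
  then show "y \<in> {(i, 1), (i, 2)}" using Y_closed[OF i a(1-3)] by blast
next
  fix y :: "nat \<times> nat" assume "y \<in> {(i, 1), (i, 2)}"
  moreover have r0: "kempe_reach V E \<tau> (C i) (i, 2) (i, 2)" by (rule kempe_reach.base) (use i in simp)
  moreover have r1: "kempe_reach V E \<tau> (C i) (i, 2) (i, 1)"
    by (rule kempe_reach.step[OF r0]) (use i in \<open>auto simp: E2_i2s\<close>)
  ultimately show "kempe_reach V E \<tau> (C i) (i, 2) y" by blast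
qed

lemma kT_i2_other:
  assumes i: "1 \<le> i" "i \<le> d" and c: "c \<noteq> A" "c \<noteq> C i"
  shows "kempe V E \<tau> (i, 2) c = {(i, 2)}"
proof (rule kempe_single)
  fix y assume "y \<in> V" "E (i, 2) y"
  then have "y = (i, 1)" using E2_i2[OF i] by simp
  then show "\<tau> y \<noteq> c" using c i by auto
qed (use i c in auto)


lemma card3: "1 \<le> i \<Longrightarrow> card {root, (i, 1::nat), (i, 2)} = 3" by simp
lemma card2a: "1 \<le> i \<Longrightarrow> card {root, (i, 1::nat)} = 2" by simp
lemma card2b: "card {(i, 1::nat), (i, 2)} = 2" by simp

lemma tmS_root_C:
  assumes i: "1 \<le> i" "i \<le> d"
  shows "tm V E p \<sigma> h root (C i) = - p 3 / 3"
proof -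
  let ?x = "flip_set \<sigma> {root, (i, 1), (i, 2)} (\<sigma> root) (C i)"
  have "h ?x = of_bool (?x root = A) + psi2 B C ?x i"
    by (rule h_block[OF i]) (auto simp: flip_set_def)
  also have "\<dots> = 0" using i AB by (simp add: flip_set_def psi2_def)
  finally have "h ?x = 0" .
  then show ?thesis unfolding tm_def kS_root_C[OF i] card3[OF i(1)] h_sigma by simp
qed

lemma tmS_root_other:
  assumes "c \<noteq> A" "\<And>j. 1 \<le> j \<Longrightarrow> j \<le> d \<Longrightarrow> c \<noteq> C j"
  shows "tm V E p \<sigma> h root c = - p 1"
proof -
  let ?x = "flip_set \<sigma> {root} (\<sigma> root) c"
  have "h ?x = of_bool (?x root = A)"
    by (rule h_base) (auto simp: flip_set_def)
  also have "\<dots> = 0" using assms by (simp add: flip_set_def)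
  finally have "h ?x = 0" .
  have k: "kempe V E \<sigma> root c = {root}" by (rule kS_root_other) (use assms in auto)
  then show ?thesis using \<open>h ?x = 0\<close> unfolding tm_def h_sigma by simp
qed

lemma tmS_i1_A:
  assumes i: "1 \<le> i" "i \<le> d"
  shows "tm V E p \<sigma> h (i, 1) A = - p 3 / 3"
proof -
  let ?x = "flip_set \<sigma> {root, (i, 1), (i, 2)} (\<sigma> (i, 1)) A"
  have "h ?x = of_bool (?x root = A) + psi2 B C ?x i"
    by (rule h_block[OF i]) (auto simp: flip_set_def)
  also have "\<dots> = 0" using i AB by (simp add: flip_set_def psi2_def)
  finally have "h ?x = 0" .
  then show ?thesis unfolding tm_def kS_i1_A[OF i] card3[OF i(1)] h_sigma by simp
qed

lemma tmS_i1_B: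
  assumes i: "1 \<le> i" "i \<le> d"
  shows "tm V E p \<sigma> h (i, 1) B = p 1"
proof -
  let ?x = "flip_set \<sigma> {(i, 1)} (\<sigma> (i, 1)) B"
  have "h ?x = of_bool (?x root = A) + psi2 B C ?x i"
    by (rule h_block[OF i]) (auto simp: flip_set_def)
  also have "\<dots> = 2" using i AB by (simp add: flip_set_def psi2_def)
  finally have "h ?x = 2" .
  have k: "kempe V E \<sigma> (i, 1) B = {(i, 1)}" by (rule kS_i1_other[OF i]) (use i AB Cf[OF i] in auto)
  then show ?thesis using \<open>h ?x = 2\<close> unfolding tm_def h_sigma by simp
qed

lemma tmS_i1_other:
  assumes i: "1 \<le> i" "i \<le> d" and c: "c \<noteq> A" "c \<noteq> B" "c \<noteq> C i"
  shows "tm V E p \<sigma> h (i, 1) c = 0"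
proof -
  let ?x = "flip_set \<sigma> {(i, 1)} (\<sigma> (i, 1)) c"
  have "h ?x = of_bool (?x root = A) + psi2 B C ?x i"
    by (rule h_block[OF i]) (auto simp: flip_set_def)
  also have "\<dots> = 1" using i c AB by (simp add: flip_set_def psi2_def)
  finally have "h ?x = 1" .
  then show ?thesis unfolding tm_def kS_i1_other[OF i c(1,3)] h_sigma by simp
qed

lemma tmS_i2_C:
  assumes i: "1 \<le> i" "i \<le> d"
  shows "tm V E p \<sigma> h (i, 2) (C i) = - p 3 / 3"
proof -
  let ?x = "flip_set \<sigma> {root, (i, 1), (i, 2)} (\<sigma> (i, 2)) (C i)"
  have "h ?x = of_bool (?x root = A) + psi2 B C ?x i"
    by (rule h_block[OF i]) (auto simp: flip_set_def)
  also have "\<dots> = 0" using i AB by (simp add: flip_set_def psi2_def)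
  finally have "h ?x = 0" .
  then show ?thesis unfolding tm_def kS_i2_C[OF i] card3[OF i(1)] h_sigma by simp
qed

lemma tmS_i2_other:
  assumes i: "1 \<le> i" "i \<le> d" and c: "c \<noteq> A" "c \<noteq> C i"
  shows "tm V E p \<sigma> h (i, 2) c = 0"
proof -
  let ?x = "flip_set \<sigma> {(i, 2)} (\<sigma> (i, 2)) c"
  have "h ?x = of_bool (?x root = A) + psi2 B C ?x i"
    by (rule h_block[OF i]) (auto simp: flip_set_def)
  also have "\<dots> = 1" using i c AB by (simp add: flip_set_def psi2_def)
  finally have "h ?x = 1" .
  then show ?thesis unfolding tm_def kS_i2_other[OF i c] h_sigma by simp
qed

lemma tmT_root_C:
  assumes i: "1 \<le> i" "i \<le> d"
  shows "tm V E p \<tau> h root (C i) = p 2 / 2"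
proof -
  let ?x = "flip_set \<tau> {root, (i, 1)} (\<tau> root) (C i)"
  have "h ?x = of_bool (?x root = A) + psi2 B C ?x i"
    by (rule h_block[OF i]) (auto simp: flip_set_def)
  also have "\<dots> = 1" using i AB by (simp add: flip_set_def psi2_def)
  finally have "h ?x = 1" .
  then show ?thesis unfolding tm_def kT_root_C[OF i] card2a[OF i(1)] h_tau by simp
qed

lemma tmT_root_A:
  shows "tm V E p \<tau> h root A = p 1"
proof -
  let ?x = "flip_set \<tau> {root} (\<tau> root) A"
  have "h ?x = of_bool (?x root = A)"
    by (rule h_base) (auto simp: flip_set_def)
  also have "\<dots> = 1" using AB by (simp add: flip_set_def)
  finally have "h ?x = 1" .
  have k: "kempe V E \<tau> root A = {root}" by (rule kT_root_other) (use AB in simp, metis Cf)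
  then show ?thesis using \<open>h ?x = 1\<close> unfolding tm_def h_tau by simp
qed

lemma tmT_root_other:
  assumes "c \<noteq> A" "c \<noteq> B" "\<And>j. 1 \<le> j \<Longrightarrow> j \<le> d \<Longrightarrow> c \<noteq> C j"
  shows "tm V E p \<tau> h root c = 0"
proof -
  let ?x = "flip_set \<tau> {root} (\<tau> root) c"
  have "h ?x = of_bool (?x root = A)"
    by (rule h_base) (auto simp: flip_set_def)
  also have "\<dots> = 0" using assms by (simp add: flip_set_def)
  finally have "h ?x = 0" .
  have k: "kempe V E \<tau> root c = {root}" by (rule kT_root_other) (use assms in auto)
  then show ?thesis using \<open>h ?x = 0\<close> unfolding tm_def h_tau by simp
qed

lemma tmT_i1_B:
  assumes i: "1 \<le> i" "i \<le> d"
  shows "tm V E p \<tau> h (i, 1) B = p 2 / 2"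
proof -
  let ?x = "flip_set \<tau> {root, (i, 1)} (\<tau> (i, 1)) B"
  have "h ?x = of_bool (?x root = A) + psi2 B C ?x i"
    by (rule h_block[OF i]) (auto simp: flip_set_def)
  also have "\<dots> = 1" using i AB by (simp add: flip_set_def psi2_def)
  finally have "h ?x = 1" .
  then show ?thesis unfolding tm_def kT_i1_B[OF i] card2a[OF i(1)] h_tau by simp
qed

lemma tmT_i1_A:
  assumes i: "1 \<le> i" "i \<le> d"
  shows "tm V E p \<tau> h (i, 1) A = - p 2 / 2"
proof -
  let ?x = "flip_set \<tau> {(i, 1), (i, 2)} (\<tau> (i, 1)) A"
  have "h ?x = of_bool (?x root = A) + psi2 B C ?x i"
    by (rule h_block[OF i]) (auto simp: flip_set_def)
  also have "\<dots> = -1" using i AB by (simp add: flip_set_def psi2_def)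
  finally have "h ?x = -1" .
  then show ?thesis unfolding tm_def kT_i1_A[OF i] card2b h_tau by simp
qed

lemma tmT_i1_other:
  assumes i: "1 \<le> i" "i \<le> d" and c: "c \<noteq> A" "c \<noteq> B" "c \<noteq> C i"
  shows "tm V E p \<tau> h (i, 1) c = 0"
proof -
  let ?x = "flip_set \<tau> {(i, 1)} (\<tau> (i, 1)) c"
  have "h ?x = of_bool (?x root = A) + psi2 B C ?x i"
    by (rule h_block[OF i]) (auto simp: flip_set_def)
  also have "\<dots> = 0" using i c AB by (simp add: flip_set_def psi2_def)
  finally have "h ?x = 0" .
  then show ?thesis unfolding tm_def kT_i1_other[OF i c] h_tau by simp
qed

lemma tmT_i2_C:
  assumes i: "1 \<le> i" "i \<le> d"
  shows "tm V E p \<tau> h (i, 2) (C i) = - p 2 / 2"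
proof -
  let ?x = "flip_set \<tau> {(i, 1), (i, 2)} (\<tau> (i, 2)) (C i)"
  have "h ?x = of_bool (?x root = A) + psi2 B C ?x i"
    by (rule h_block[OF i]) (auto simp: flip_set_def)
  also have "\<dots> = -1" using i AB by (simp add: flip_set_def psi2_def)
  finally have "h ?x = -1" .
  then show ?thesis unfolding tm_def kT_i2_C[OF i] card2b h_tau by simp
qed

lemma tmT_i2_other:
  assumes i: "1 \<le> i" "i \<le> d" and c: "c \<noteq> A" "c \<noteq> C i"
  shows "tm V E p \<tau> h (i, 2) c = 0"
proof -
  let ?x = "flip_set \<tau> {(i, 2)} (\<tau> (i, 2)) c"
  have "h ?x = of_bool (?x root = A) + psi2 B C ?x i"
    by (rule h_block[OF i]) (auto simp: flip_set_def)
  also have "\<dots> = 0" using i c AB by (simp add: flip_set_def psi2_def)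
  finally have "h ?x = 0" .
  then show ?thesis unfolding tm_def kT_i2_other[OF i c] h_tau by simp
qed


lemma sum_sigma:
  "(\<Sum>w\<in>V. \<Sum>c\<in>{0..<k}. tm V E p \<sigma> h w c) =
     real d * (- p 3 / 3) + (- p 1) + (real k - 2 - real d) * (- p 1) + real d * (p 1 - 2 * p 3 / 3)"
proof -
  have r: "(\<Sum>c\<in>{0..<k}. tm V E p \<sigma> h root c) = real (card {1..d}) * (- p 3 / 3) + (- p 1) + (real k - 2 - real (card {1..d})) * (- p 1)"
  proof (rule sum_colors[OF injC])
    show "tm V E p \<sigma> h root A = 0" using tm_self[of V E p \<sigma> h root] by simp
    show "tm V E p \<sigma> h root B = - p 1" by (rule tmS_root_other) (use AB in simp, metis Cf)
    show "\<And>i. i \<in> {1..d} \<Longrightarrow> tm V E p \<sigma> h root (C i) = - p 3 / 3" using tmS_root_C by simp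
    show "\<And>c. c < k \<Longrightarrow> c \<noteq> A \<Longrightarrow> c \<noteq> B \<Longrightarrow> c \<notin> C ` {1..d} \<Longrightarrow> tm V E p \<sigma> h root c = - p 1"
      by (rule tmS_root_other) auto
  qed (use AB Cf in auto)
  have b: "(\<Sum>j\<in>{1..2}. \<Sum>c\<in>{0..<k}. tm V E p \<sigma> h (i, j) c) = p 1 - 2 * p 3 / 3" if i: "1 \<le> i" "i \<le> d" for i
  proof -
    have 1: "(\<Sum>c\<in>{0..<k}. tm V E p \<sigma> h (i, 1) c) = tm V E p \<sigma> h (i, 1) A + tm V E p \<sigma> h (i, 1) B"
    proof (rule sum_two)
      fix c assume "c < k" "c \<noteq> A" "c \<noteq> B"
      then show "tm V E p \<sigma> h (i, 1) c = 0"
        using tmS_i1_other[OF i] tm_self[of V E p \<sigma> h "(i, 1)"] i by (cases "c = C i") auto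
    qed (use AB in auto)
    have 2: "(\<Sum>c\<in>{0..<k}. tm V E p \<sigma> h (i, 2) c) = tm V E p \<sigma> h (i, 2) (C i) + tm V E p \<sigma> h (i, 2) A"
    proof (rule sum_two)
      fix c assume "c < k" "c \<noteq> C i" "c \<noteq> A"
      then show "tm V E p \<sigma> h (i, 2) c = 0" using tmS_i2_other[OF i] by auto
    qed (use AB Cf[OF i] in auto)
    have 3: "tm V E p \<sigma> h (i, 2) A = 0" using tm_self[of V E p \<sigma> h "(i, 2)"] i by simp
    show ?thesis unfolding sum_12 1 2 3 tmS_i1_A[OF i] tmS_i1_B[OF i] tmS_i2_C[OF i] by simp
  qed
  have "(\<Sum>i\<in>{1..d}. \<Sum>j\<in>{1..2}. \<Sum>c\<in>{0..<k}. tm V E p \<sigma> h (i, j) c) = (\<Sum>i\<in>{1..d}. p 1 - 2 * p 3 / 3)"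
    by (rule sum.cong[OF refl], rule b) auto
  then show ?thesis unfolding sum_Vpath r by simp
qed

lemma sum_tau:
  "(\<Sum>w\<in>V. \<Sum>c\<in>{0..<k}. tm V E p \<tau> h w c) = real d * (p 2 / 2) + p 1 + real d * (- p 2 / 2)"
proof -
  have r: "(\<Sum>c\<in>{0..<k}. tm V E p \<tau> h root c) = real (card {1..d}) * (p 2 / 2) + p 1 + (real k - 2 - real (card {1..d})) * 0"
  proof (rule sum_colors[OF injC])
    show "tm V E p \<tau> h root B = 0" using tm_self[of V E p \<tau> h root] by simp
    show "tm V E p \<tau> h root A = p 1" by (rule tmT_root_A)
    show "\<And>i. i \<in> {1..d} \<Longrightarrow> tm V E p \<tau> h root (C i) = p 2 / 2" using tmT_root_C by simp
    show "\<And>c. c < k \<Longrightarrow> c \<noteq> B \<Longrightarrow> c \<noteq> A \<Longrightarrow> c \<notin> C ` {1..d} \<Longrightarrow> tm V E p \<tau> h root c = 0"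
      by (rule tmT_root_other) auto
  qed (use AB Cf in auto)
  have b: "(\<Sum>j\<in>{1..2}. \<Sum>c\<in>{0..<k}. tm V E p \<tau> h (i, j) c) = - p 2 / 2" if i: "1 \<le> i" "i \<le> d" for i
  proof -
    have 1: "(\<Sum>c\<in>{0..<k}. tm V E p \<tau> h (i, 1) c) = tm V E p \<tau> h (i, 1) A + tm V E p \<tau> h (i, 1) B"
    proof (rule sum_two)
      fix c assume "c < k" "c \<noteq> A" "c \<noteq> B"
      then show "tm V E p \<tau> h (i, 1) c = 0"
        using tmT_i1_other[OF i] tm_self[of V E p \<tau> h "(i, 1)"] i by (cases "c = C i") auto
    qed (use AB in auto)
    have 2: "(\<Sum>c\<in>{0..<k}. tm V E p \<tau> h (i, 2) c) = tm V E p \<tau> h (i, 2) (C i) + tm V E p \<tau> h (i, 2) A"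
    proof (rule sum_two)
      fix c assume "c < k" "c \<noteq> C i" "c \<noteq> A"
      then show "tm V E p \<tau> h (i, 2) c = 0" using tmT_i2_other[OF i] by auto
    qed (use AB Cf[OF i] in auto)
    have 3: "tm V E p \<tau> h (i, 2) A = 0" using tm_self[of V E p \<tau> h "(i, 2)"] i by simp
    show ?thesis unfolding sum_12 1 2 3 tmT_i1_A[OF i] tmT_i1_B[OF i] tmT_i2_C[OF i] by simp
  qed
  have "(\<Sum>i\<in>{1..d}. \<Sum>j\<in>{1..2}. \<Sum>c\<in>{0..<k}. tm V E p \<tau> h (i, j) c) = (\<Sum>i\<in>{1..d}. - p 2 / 2)"
    by (rule sum.cong[OF refl], rule b) auto
  then show ?thesis unfolding sum_Vpath r by simp
qed


lemma ham_V: "real (hamming V x y) = of_bool (x root \<noteq> y root) +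
   (\<Sum>i\<in>{1..d}. of_bool (x (i, 1) \<noteq> y (i, 1)) + of_bool (x (i, 2) \<noteq> y (i, 2)))"
  unfolding hamming_sum[OF Vpath_finite] sum_Vpath sum_12 ..

lemma T_bounds:
  "(0::real) \<le> of_bool (x root = A) + (\<Sum>i\<in>{1..d}. of_bool (x root = C i) * of_bool (x (i, 2) = C i))"
  "of_bool (x root = A) + (\<Sum>i\<in>{1..d}. of_bool (x root = C i) * of_bool (x (i, 2) = C i)) \<le> (1::real)"
proof -
  show "(0::real) \<le> of_bool (x root = A) + (\<Sum>i\<in>{1..d}. of_bool (x root = C i) * of_bool (x (i, 2) = C i))"
    by (intro add_nonneg_nonneg sum_nonneg) auto
  show "of_bool (x root = A) + (\<Sum>i\<in>{1..d}. of_bool (x root = C i) * of_bool (x (i, 2) = C i)) \<le> (1::real)"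
  proof (cases "x root = A")
    case True
    then have "(\<Sum>i\<in>{1..d}. of_bool (x root = C i) * of_bool (x (i, 2) = C i)) = (0::real)"
      by (intro sum.neutral) (auto dest: Cf)
    then show ?thesis using True by simp
  next
    case False
    have "(\<Sum>i\<in>{1..d}. of_bool (x root = C i) * of_bool (x (i, 2) = C i)) \<le> (1::real)"
      by (rule sum_inj_le1[OF injC]) auto
    then show ?thesis using False by simp
  qed
qed

lemma h_split: "h x = (of_bool (x root = A) + (\<Sum>i\<in>{1..d}. of_bool (x root = C i) * of_bool (x (i, 2) = C i)))
   + (\<Sum>i\<in>{1..d}. of_bool (x (i, 1) = B) - of_bool (x (i, 2) = C i))"
proof -
  have "(\<Sum>i\<in>{1..d}. psi2 B C x i) = (\<Sum>i\<in>{1..d}. of_bool (x root = C i) * of_bool (x (i, 2) = C i))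
     + (\<Sum>i\<in>{1..d}. of_bool (x (i, 1) = B) - of_bool (x (i, 2) = C i))"
    unfolding sum.distrib[symmetric] psi2_def by (intro sum.cong refl) linarith
  then show ?thesis unfolding h2_def by linarith
qed

lemma h_lip: "h x - h y \<le> real (hamming V x y)"
proof (cases "x root = y root")
  case True
  have "h x - h y = (\<Sum>i\<in>{1..d}. psi2 B C x i - psi2 B C y i)"
    unfolding h2_def using True by (simp add: sum_subtractf)
  also have "\<dots> \<le> (\<Sum>i\<in>{1..d}. of_bool (x (i, 1) \<noteq> y (i, 1)) + of_bool (x (i, 2) \<noteq> y (i, 2)))"
    by (rule sum_mono) (use True in \<open>auto simp: psi2_def\<close>)
  also have "\<dots> \<le> real (hamming V x y)" unfolding ham_V by simp
  finally show ?thesis .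
next
  case False
  have "h x - h y \<le> 1 + (\<Sum>i\<in>{1..d}. (of_bool (x (i, 1) = B) - of_bool (x (i, 2) = C i)) - (of_bool (y (i, 1) = B) - of_bool (y (i, 2) = C i)))"
    unfolding h_split[of x] h_split[of y] sum_subtractf using T_bounds[of x] T_bounds[of y] by linarith
  also have "\<dots> \<le> 1 + (\<Sum>i\<in>{1..d}. of_bool (x (i, 1) \<noteq> y (i, 1)) + of_bool (x (i, 2) \<noteq> y (i, 2)))"
    by (intro add_left_mono sum_mono) auto
  also have "\<dots> = real (hamming V x y)" unfolding ham_V using False by simp
  finally show ?thesis .
qed

lemma G2_result:
  assumes "contracting_coupling V E k p \<sigma> \<tau>" "\<forall>\<alpha>. 0 \<le> p \<alpha> \<and> p \<alpha> \<le> 1"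
  shows "(2 * real d - real k) * p 1 - real d * p 3 < 0"
proof -
  have "(\<Sum>w\<in>V. \<Sum>c\<in>{0..<k}. tm V E p \<sigma> h w c) - (\<Sum>w\<in>V. \<Sum>c\<in>{0..<k}. tm V E p \<tau> h w c) < 0"
  proof (rule contracting_imp[OF assms(1) Vpath_finite _ _ assms(2) h_lip])
    show "V \<noteq> {}" using root_in_Vpath by blast
  qed (use AB h_sigma h_tau in auto)
  then show ?thesis unfolding sum_sigma sum_tau by (simp add: algebra_simps)
qed

end


lemma V1_eq: "V1 d = Vpath d 3" by (simp add: V1_def Vpath_def)

lemma E1_root: "E1 d root y \<longleftrightarrow> (\<exists>i. 1 \<le> i \<and> i \<le> d \<and> y = (i, 1))"
  unfolding E1_def E1_base_def root_def by auto
lemma E1_i1: "1 \<le> i \<Longrightarrow> i \<le> d \<Longrightarrow> E1 d (i, 1) y \<longleftrightarrow> y = root \<or> y = (i, 2) \<or> y = (i, 3)"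
  unfolding E1_def E1_base_def root_def by auto
lemma E1_i2: "1 \<le> i \<Longrightarrow> i \<le> d \<Longrightarrow> E1 d (i, 2) y \<longleftrightarrow> y = (i, 1)"
  unfolding E1_def E1_base_def root_def by auto
lemma E1_i3: "1 \<le> i \<Longrightarrow> i \<le> d \<Longrightarrow> E1 d (i, 3) y \<longleftrightarrow> y = (i, 1)"
  unfolding E1_def E1_base_def root_def by auto
lemmas E1_i1s = E1_i1[simplified]
lemmas E1_i2s = E1_i2[simplified]
lemmas E1_i3s = E1_i3[simplified]

lemma col1_root[simp]: "col1 r s C root = r" by (simp add: col1_def)
definition bl :: "nat \<Rightarrow> nat" where "bl i = (i + 1) div 2"
lemma col1_i1[simp]: "1 \<le> i \<Longrightarrow> col1 r s C (i, Suc 0) = C (bl i)"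
  unfolding col1_def root_def bl_def by simp
lemma col1_it[simp]: "1 \<le> i \<Longrightarrow> t \<noteq> Suc 0 \<Longrightarrow> col1 r s C (i, t) = s"
  unfolding col1_def root_def by simp

definition pt :: "nat \<Rightarrow> nat" where "pt i = (if odd i then i + 1 else i - 1)"

lemma sum_123: "(\<Sum>j\<in>{1..3::nat}. g j) = g 1 + g 2 + g 3"
proof -
  have "{1..3::nat} = {1, 2, 3}" by auto
  then show ?thesis by (simp add: add.assoc)
qed

context
  fixes d :: nat assumes ev: "even d"
begin

lemma bl_range: "1 \<le> i \<Longrightarrow> i \<le> d \<Longrightarrow> 1 \<le> bl i \<and> bl i \<le> d div 2"
  using ev unfolding bl_def by (auto elim!: evenE) 

lemma pt_range: "1 \<le> i \<Longrightarrow> i \<le> d \<Longrightarrow> 1 \<le> pt i \<and> pt i \<le> d"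
  using ev unfolding pt_def by (cases "odd i"; simp; presburger)

end

lemma pt_neq: "1 \<le> i \<Longrightarrow> pt i \<noteq> i" unfolding pt_def by (cases "odd i"; simp; presburger)
lemma pt_neq': "1 \<le> i \<Longrightarrow> i \<noteq> pt i" unfolding pt_def by (cases "odd i"; simp; presburger)
lemma bl_pt: "1 \<le> i \<Longrightarrow> bl (pt i) = bl i" unfolding pt_def bl_def by (cases "odd i"; simp; presburger)
lemma pt_pt: "1 \<le> i \<Longrightarrow> pt (pt i) = i" unfolding pt_def by (cases "odd i"; simp; presburger)
lemma bl_eq: "1 \<le> a \<Longrightarrow> 1 \<le> i \<Longrightarrow> bl a = bl i \<Longrightarrow> a = i \<or> a = pt i"
  unfolding pt_def bl_def by (cases "odd i"; simp; presburger)
lemma bl_odd: "1 \<le> j \<Longrightarrow> bl (2 * j - 1) = j" unfolding bl_def by presburger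
lemma bl_even: "bl (2 * j) = j" unfolding bl_def by presburger
lemma pt_odd: "1 \<le> j \<Longrightarrow> pt (2 * j - 1) = 2 * j" unfolding pt_def by (simp; presburger)
lemma members: "1 \<le> i \<Longrightarrow> (2 * bl i - 1 = i \<and> 2 * bl i = pt i) \<or> (2 * bl i - 1 = pt i \<and> 2 * bl i = i)"
  unfolding pt_def bl_def by (cases "odd i"; simp; presburger)

definition Mc :: "nat \<Rightarrow> (nat \<times> nat \<Rightarrow> nat) \<Rightarrow> nat \<Rightarrow> nat \<Rightarrow> nat" where
  "Mc c x a b = of_bool (x (a, 2) = c) + of_bool (x (a, 3) = c) + of_bool (x (b, 2) = c) + of_bool (x (b, 3) = c)"
definition Gb :: "nat \<Rightarrow> nat \<Rightarrow> (nat \<times> nat \<Rightarrow> nat) \<Rightarrow> nat \<Rightarrow> nat \<Rightarrow> real" where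
  "Gb B c x a b = of_bool ((x (a, 1) = B) \<noteq> (x (b, 1) = B)) + \<bar>real (Mc c x a b) - 2\<bar> - 2"
definition F1 :: "nat \<Rightarrow> nat \<Rightarrow> (nat \<times> nat \<Rightarrow> nat) \<Rightarrow> nat \<Rightarrow> nat \<Rightarrow> real" where
  "F1 B c x a b = Gb B c x a b + of_bool (x root = c) * of_bool (2 \<le> Mc c x a b)"
definition h1 :: "nat \<Rightarrow> nat \<Rightarrow> nat \<Rightarrow> (nat \<Rightarrow> nat) \<Rightarrow> (nat \<times> nat \<Rightarrow> nat) \<Rightarrow> real" where
  "h1 d A B C x = of_bool (x root = A) + (\<Sum>j\<in>{1..d div 2}. F1 B (C j) x (2 * j - 1) (2 * j))"

lemma Mc_sym: "Mc c x a b = Mc c x b a" unfolding Mc_def by simp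
lemma Gb_sym: "Gb B c x a b = Gb B c x b a" unfolding Gb_def Mc_sym[of c x a b] by auto
lemma F1_sym: "F1 B c x a b = F1 B c x b a" unfolding F1_def Gb_sym[of B c x a b] Mc_sym[of c x a b] ..

lemma F1_base: "x (a, 1) \<noteq> B \<Longrightarrow> x (b, 1) \<noteq> B \<Longrightarrow> x (a, 2) \<noteq> c \<Longrightarrow> x (a, 3) \<noteq> c \<Longrightarrow> x (b, 2) \<noteq> c \<Longrightarrow> x (b, 3) \<noteq> c
   \<Longrightarrow> F1 B c x a b = 0"
  unfolding F1_def Gb_def Mc_def by simp

locale cfg1 =
  fixes d k A B :: nat and C :: "nat \<Rightarrow> nat"
  assumes ev: "even d" and vc: "valid_colors k (d div 2) A B C"
begin

lemma AB: "A < k" "B < k" "A \<noteq> B" "B \<noteq> A" using vc unfolding valid_colors_def by auto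
lemma injC: "inj_on C {1..d div 2}" using vc unfolding valid_colors_def by blast
lemma Cf: "1 \<le> j \<Longrightarrow> j \<le> d div 2 \<Longrightarrow> C j < k \<and> C j \<noteq> A \<and> C j \<noteq> B \<and> A \<noteq> C j \<and> B \<noteq> C j"
proof -
  assume "1 \<le> j" "j \<le> d div 2"
  then have "j \<in> {1..d div 2}" by simp
  then have "C j < k \<and> C j \<noteq> A \<and> C j \<noteq> B" using vc unfolding valid_colors_def by blast
  then show ?thesis by metis
qed
lemma Ceq: "1 \<le> i \<Longrightarrow> i \<le> d div 2 \<Longrightarrow> 1 \<le> j \<Longrightarrow> j \<le> d div 2 \<Longrightarrow> C i = C j \<longleftrightarrow> i = j"
  by (rule inj_on_eq_iff[OF injC]) auto

lemma blr: "1 \<le> i \<Longrightarrow> i \<le> d \<Longrightarrow> 1 \<le> bl i \<and> bl i \<le> d div 2" using bl_range[OF ev] .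
lemma ptr: "1 \<le> i \<Longrightarrow> i \<le> d \<Longrightarrow> 1 \<le> pt i \<and> pt i \<le> d" using pt_range[OF ev] .
lemma Cb: "1 \<le> i \<Longrightarrow> i \<le> d \<Longrightarrow> C (bl i) < k \<and> C (bl i) \<noteq> A \<and> C (bl i) \<noteq> B \<and> A \<noteq> C (bl i) \<and> B \<noteq> C (bl i)"
  using Cf blr by blast

abbreviation "\<sigma> \<equiv> col1 A A C"
abbreviation "\<tau> \<equiv> col1 B A C"
abbreviation "V \<equiv> V1 d"
abbreviation "E \<equiv> E1 d"
abbreviation "h \<equiv> h1 d A B C"

definition base :: "(nat \<times> nat \<Rightarrow> nat) \<Rightarrow> nat \<Rightarrow> bool" where
  "base x a \<longleftrightarrow> x (a, 1) \<noteq> B \<and> x (a, 2) \<noteq> C (bl a) \<and> x (a, 3) \<noteq> C (bl a)"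

lemma h_blk:
  assumes i: "1 \<le> i" "i \<le> d" and oth: "\<And>a. 1 \<le> a \<Longrightarrow> a \<le> d \<Longrightarrow> a \<noteq> i \<Longrightarrow> a \<noteq> pt i \<Longrightarrow> base x a"
  shows "h x = of_bool (x root = A) + F1 B (C (bl i)) x i (pt i)"
proof -
  have j: "bl i \<in> {1..d div 2}" using blr[OF i] by simp
  have "(\<Sum>j\<in>{1..d div 2}. F1 B (C j) x (2 * j - 1) (2 * j)) =
      F1 B (C (bl i)) x (2 * bl i - 1) (2 * bl i) + (\<Sum>j\<in>{1..d div 2} - {bl i}. F1 B (C j) x (2 * j - 1) (2 * j))"
    by (rule sum.remove[OF _ j]) simp
  also have "(\<Sum>j\<in>{1..d div 2} - {bl i}. F1 B (C j) x (2 * j - 1) (2 * j)) = 0"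
  proof (rule sum.neutral, rule ballI)
    fix j assume jj: "j \<in> {1..d div 2} - {bl i}"
    then have j1: "1 \<le> j" "j \<le> d div 2" "j \<noteq> bl i" by auto
    have a1: "1 \<le> 2 * j - 1" "2 * j - 1 \<le> d" "1 \<le> 2 * j" "2 * j \<le> d" using j1 ev by auto
    have "bl (2 * j - 1) = j" "bl (2 * j) = j" using bl_odd[OF j1(1)] bl_even by auto
    moreover have "bl (pt i) = bl i" using bl_pt[OF i(1)] .
    ultimately have ne: "2 * j - 1 \<noteq> i" "2 * j - 1 \<noteq> pt i" "2 * j \<noteq> i" "2 * j \<noteq> pt i" using j1(3) by metis+
    have "base x (2 * j - 1)" "base x (2 * j)" using oth a1 ne by auto
    then show "F1 B (C j) x (2 * j - 1) (2 * j) = 0"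
      unfolding base_def \<open>bl (2 * j - 1) = j\<close> \<open>bl (2 * j) = j\<close> by (intro F1_base) auto
  qed
  also have "F1 B (C (bl i)) x (2 * bl i - 1) (2 * bl i) = F1 B (C (bl i)) x i (pt i)"
    using members[OF i(1)] F1_sym by metis
  finally show ?thesis unfolding h1_def by simp
qed

lemma h_base1:
  assumes "\<And>a. 1 \<le> a \<Longrightarrow> a \<le> d \<Longrightarrow> base x a"
  shows "h x = of_bool (x root = A)"
proof -
  have "(\<Sum>j\<in>{1..d div 2}. F1 B (C j) x (2 * j - 1) (2 * j)) = 0"
  proof (rule sum.neutral, rule ballI)
    fix j assume "j \<in> {1..d div 2}"
    then have j1: "1 \<le> j" "j \<le> d div 2" by auto
    have a1: "1 \<le> 2 * j - 1" "2 * j - 1 \<le> d" "1 \<le> 2 * j" "2 * j \<le> d" using j1 ev by auto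
    have b: "bl (2 * j - 1) = j" "bl (2 * j) = j" using bl_odd[OF j1(1)] bl_even by auto
    have "base x (2 * j - 1)" "base x (2 * j)" using assms a1 by auto
    then show "F1 B (C j) x (2 * j - 1) (2 * j) = 0"
      unfolding base_def b by (intro F1_base) auto
  qed
  then show ?thesis unfolding h1_def by simp
qed

lemma base_sigma: "1 \<le> a \<Longrightarrow> a \<le> d \<Longrightarrow> base \<sigma> a"
  unfolding base_def using Cb by simp
lemma base_tau: "1 \<le> a \<Longrightarrow> a \<le> d \<Longrightarrow> base \<tau> a"
  unfolding base_def using Cb by simp

lemma h_sigma: "h \<sigma> = 1" using h_base1[OF base_sigma] by simp
lemma h_tau: "h \<tau> = 0" using h_base1[OF base_tau] AB by simp


definition Xs :: "nat \<Rightarrow> (nat \<times> nat) set" where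
  "Xs i = {root, (i, 1), (i, 2), (i, 3), (pt i, 1), (pt i, 2), (pt i, 3)}"
definition Xp :: "nat \<Rightarrow> (nat \<times> nat) set" where
  "Xp i = {root, (i, 1), (pt i, 1)}"
definition Ys :: "nat \<Rightarrow> (nat \<times> nat) set" where
  "Ys i = {(i, 1), (i, 2), (i, 3)}"

lemma V_eq: "V = Vpath d 3" by (rule V1_eq)
lemma inV1: "1 \<le> a \<Longrightarrow> a \<le> d \<Longrightarrow> t \<in> {1, 2, 3} \<Longrightarrow> (a, t) \<in> V" "root \<in> V"
  by (auto simp: V_eq)

lemma nbr_root1: "y \<in> V \<Longrightarrow> E root y \<Longrightarrow> \<exists>a. 1 \<le> a \<and> a \<le> d \<and> y = (a, 1)"
  using E1_root by blast

lemma same_block: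
  assumes i: "1 \<le> i" "i \<le> d" and a: "1 \<le> a" "a \<le> d" and e: "C (bl a) = C (bl i)"
  shows "a = i \<or> a = pt i"
proof -
  have "bl a = bl i" using e Ceq blr[OF a] blr[OF i] by blast
  then show ?thesis using bl_eq a(1) i(1) by blast
qed

lemma nbr_block:
  assumes a: "1 \<le> a" "a \<le> d" and x: "x = (a, 1) \<or> x = (a, 2) \<or> x = (a, 3)" and y: "E x y"
  shows "y = root \<or> y = (a, 1) \<or> y = (a, 2) \<or> y = (a, 3)"
  using x y E1_i1[OF a] E1_i2[OF a] E1_i3[OF a] by (cases y) auto

lemma X_closed1:
  assumes i: "1 \<le> i" "i \<le> d" and x: "x \<in> Xs i" and y: "y \<in> V" "E x y" "\<sigma> y \<in> {A, C (bl i)}"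
  shows "y \<in> Xs i"
proof -
  have p: "1 \<le> pt i" "pt i \<le> d" using ptr[OF i] by auto
  { assume "x = root"
    then obtain a where a: "1 \<le> a" "a \<le> d" "y = (a, 1)" using nbr_root1 y by blast
    then have "C (bl a) = C (bl i)" using y(3) Cb[OF a(1,2)] by auto
    then have "a = i \<or> a = pt i" using same_block[OF i a(1,2)] by blast
    then have ?thesis using a by (auto simp: Xs_def) }
  moreover { assume "x = (i, 1) \<or> x = (i, 2) \<or> x = (i, 3)"
    then have ?thesis using nbr_block[OF i _ y(2)] by (auto simp: Xs_def) }
  moreover { assume "x = (pt i, 1) \<or> x = (pt i, 2) \<or> x = (pt i, 3)"
    then have ?thesis using nbr_block[OF p _ y(2)] by (auto simp: Xs_def) }
  ultimately show ?thesis using x unfolding Xs_def by blast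
qed

lemma reachX:
  assumes i: "1 \<le> i" "i \<le> d" and pair: "{\<sigma> w, c} = {A, C (bl i)}" and r: "kempe_reach V E \<sigma> c w root"
    and z: "z \<in> Xs i"
  shows "kempe_reach V E \<sigma> c w z"
proof -
  have p: "1 \<le> pt i" "pt i \<le> d" using ptr[OF i] by auto
  have bp: "bl (pt i) = bl i" using bl_pt[OF i(1)] .
  have cb: "C (bl i) \<noteq> A" using Cb[OF i] by simp
  have u: "kempe_reach V E \<sigma> c w (a, 1)" if a: "1 \<le> a" "a \<le> d" "bl a = bl i" for a
  proof (rule kempe_reach.step[OF r])
    show "(a, 1) \<in> V" using a by (simp add: V_eq)
    show "E root (a, 1)" using a E1_root by blast
    show "\<sigma> (a, 1) \<in> {\<sigma> w, c}" unfolding pair using a by simp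
    show "\<sigma> (a, 1) \<noteq> \<sigma> root" using a cb by simp
  qed
  have wt: "kempe_reach V E \<sigma> c w (a, t)" if a: "1 \<le> a" "a \<le> d" "bl a = bl i" and t: "t = 2 \<or> t = 3" for a t
  proof (rule kempe_reach.step[OF u[OF a]])
    show "(a, t) \<in> V" using a t by (auto simp: V_eq)
    show "E (a, 1) (a, t)" using E1_i1[OF a(1,2)] t by auto
    show "\<sigma> (a, t) \<in> {\<sigma> w, c}" unfolding pair using a t by auto
    show "\<sigma> (a, t) \<noteq> \<sigma> (a, 1)" using a t cb by auto
  qed
  show ?thesis using z r u[OF i refl] u[OF p bp] wt[OF i refl] wt[OF p bp] unfolding Xs_def by auto
qed

lemma kS1_root_C:
  assumes i: "1 \<le> i" "i \<le> d"
  shows "kempe V E \<sigma> root (C (bl i)) = Xs i"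
proof (rule kempe_eqI)
  show "root \<in> Xs i" by (simp add: Xs_def)
  show "C (bl i) \<noteq> \<sigma> root" using Cb[OF i] by simp
next
  fix x y assume a: "x \<in> Xs i" "y \<in> V" "E x y" "\<sigma> y \<in> {\<sigma> root, C (bl i)}"
  then show "y \<in> Xs i" using X_closed1[OF i a(1-3)] by simp
next
  fix y assume y: "y \<in> Xs i"
  have r: "kempe_reach V E \<sigma> (C (bl i)) root root" by (rule kempe_reach.base) (simp add: V_eq)
  show "kempe_reach V E \<sigma> (C (bl i)) root y" by (rule reachX[OF i _ r y]) simp
qed

lemma kS1_root_other:
  assumes "c \<noteq> A" "\<And>j. 1 \<le> j \<Longrightarrow> j \<le> d div 2 \<Longrightarrow> c \<noteq> C j"
  shows "kempe V E \<sigma> root c = {root}"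
proof (rule kempe_single)
  fix y assume "y \<in> V" "E root y"
  then obtain a where a: "1 \<le> a" "a \<le> d" "y = (a, 1)" using nbr_root1 by blast
  then show "\<sigma> y \<noteq> c" using assms(2) blr[OF a(1,2)] by auto
qed (use assms in \<open>auto simp: V_eq\<close>)

lemma kS1_a1_A:
  assumes i: "1 \<le> i" "i \<le> d"
  shows "kempe V E \<sigma> (i, 1) A = Xs i"
proof (rule kempe_eqI)
  show "(i, 1) \<in> Xs i" by (simp add: Xs_def)
  show "A \<noteq> \<sigma> (i, 1)" using Cb[OF i] i by simp
next
  fix x y assume a: "x \<in> Xs i" "y \<in> V" "E x y" "\<sigma> y \<in> {\<sigma> (i, 1), A}"
  then show "y \<in> Xs i" using X_closed1[OF i a(1-3)] i by auto
next
  fix y assume y: "y \<in> Xs i"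
  have r0: "kempe_reach V E \<sigma> A (i, 1) (i, 1)" by (rule kempe_reach.base) (use i in \<open>simp add: V_eq\<close>)
  have rr: "kempe_reach V E \<sigma> A (i, 1) root"
  proof (rule kempe_reach.step[OF r0])
    show "E (i, 1) root" using E1_i1[OF i] by simp
    show "\<sigma> root \<noteq> \<sigma> (i, 1)" using i Cb[OF i] by simp
  qed (simp_all add: V_eq)
  have pr: "{\<sigma> (i, 1), A} = {A, C (bl i)}" using i by (simp add: insert_commute)
  show "kempe_reach V E \<sigma> A (i, 1) y" by (rule reachX[OF i pr rr y])
qed

lemma kS1_a1_other:
  assumes i: "1 \<le> i" "i \<le> d" and c: "c \<noteq> A" "c \<noteq> C (bl i)"
  shows "kempe V E \<sigma> (i, 1) c = {(i, 1)}"
proof (rule kempe_single)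
  fix y assume "y \<in> V" "E (i, 1) y"
  then have "y = root \<or> y = (i, 2) \<or> y = (i, 3)" using E1_i1[OF i] by simp
  then show "\<sigma> y \<noteq> c" using c i by auto
qed (use i c in \<open>auto simp: V_eq\<close>)

lemma kS1_at_C:
  assumes i: "1 \<le> i" "i \<le> d" and t: "t = 2 \<or> t = 3"
  shows "kempe V E \<sigma> (i, t) (C (bl i)) = Xs i"
proof (rule kempe_eqI)
  show "(i, t) \<in> Xs i" using t by (auto simp: Xs_def)
  show "C (bl i) \<noteq> \<sigma> (i, t)" using Cb[OF i] i t by auto
next
  fix x y assume a: "x \<in> Xs i" "y \<in> V" "E x y" "\<sigma> y \<in> {\<sigma> (i, t), C (bl i)}"
  then show "y \<in> Xs i" using X_closed1[OF i a(1-3)] i t by auto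
next
  fix y assume y: "y \<in> Xs i"
  have r0: "kempe_reach V E \<sigma> (C (bl i)) (i, t) (i, t)" by (rule kempe_reach.base) (use i t in \<open>auto simp: V_eq\<close>)
  have r1: "kempe_reach V E \<sigma> (C (bl i)) (i, t) (i, 1)"
  proof (rule kempe_reach.step[OF r0])
    show "E (i, t) (i, 1)" using t E1_i2[OF i] E1_i3[OF i] by auto
    show "\<sigma> (i, 1) \<noteq> \<sigma> (i, t)" using t i Cb[OF i] by auto
    show "(i, 1) \<in> V" using i by (simp add: V_eq)
    show "\<sigma> (i, 1) \<in> {\<sigma> (i, t), C (bl i)}" using i by simp
  qed
  have rr: "kempe_reach V E \<sigma> (C (bl i)) (i, t) root"
  proof (rule kempe_reach.step[OF r1])
    show "\<sigma> root \<in> {\<sigma> (i, t), C (bl i)}" using t i by auto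
    show "E (i, 1) root" using E1_i1[OF i] by simp
    show "\<sigma> root \<noteq> \<sigma> (i, 1)" using i Cb[OF i] by simp
  qed (simp_all add: V_eq)
  have pr: "{\<sigma> (i, t), C (bl i)} = {A, C (bl i)}" using i t by auto
  show "kempe_reach V E \<sigma> (C (bl i)) (i, t) y" by (rule reachX[OF i pr rr y])
qed

lemma kS1_at_other:
  assumes i: "1 \<le> i" "i \<le> d" and t: "t = 2 \<or> t = 3" and c: "c \<noteq> A" "c \<noteq> C (bl i)"
  shows "kempe V E \<sigma> (i, t) c = {(i, t)}"
proof (rule kempe_single)
  fix y assume "y \<in> V" "E (i, t) y"
  then have "y = (i, 1)" using E1_i2[OF i] E1_i3[OF i] t by (cases y) auto
  then show "\<sigma> y \<noteq> c" using c i by auto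
qed (use i c t in \<open>auto simp: V_eq\<close>)


lemma Xp_closed:
  assumes i: "1 \<le> i" "i \<le> d" and x: "x \<in> Xp i" and y: "y \<in> V" "E x y" "\<tau> y \<in> {B, C (bl i)}"
  shows "y \<in> Xp i"
proof -
  have p: "1 \<le> pt i" "pt i \<le> d" using ptr[OF i] by auto
  have cb: "A \<noteq> B" "A \<noteq> C (bl i)" using Cb[OF i] AB by auto
  { assume "x = root"
    then obtain a where a: "1 \<le> a" "a \<le> d" "y = (a, 1)" using nbr_root1 y by blast
    then have "C (bl a) = C (bl i)" using y(3) Cb[OF a(1,2)] by auto
    then have "a = i \<or> a = pt i" using same_block[OF i a(1,2)] by blast
    then have ?thesis using a by (auto simp: Xp_def) }
  moreover { assume "x = (i, 1)"
    then have "y = root \<or> y = (i, 2) \<or> y = (i, 3)" using E1_i1[OF i] y(2) by (cases y) auto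
    then have ?thesis using y(3) i cb by (auto simp: Xp_def) }
  moreover { assume "x = (pt i, 1)"
    then have "y = root \<or> y = (pt i, 2) \<or> y = (pt i, 3)" using E1_i1[OF p] y(2) by (cases y) auto
    then have ?thesis using y(3) p cb by (auto simp: Xp_def) }
  ultimately show ?thesis using x unfolding Xp_def by blast
qed

lemma Ys_closed:
  assumes i: "1 \<le> i" "i \<le> d" and x: "x \<in> Ys i" and y: "y \<in> V" "E x y" "\<tau> y \<in> {A, C (bl i)}"
  shows "y \<in> Ys i"
proof -
  have cb: "B \<noteq> A" "B \<noteq> C (bl i)" using Cb[OF i] AB by auto
  { assume "x = (i, 1)"
    then have "y = root \<or> y = (i, 2) \<or> y = (i, 3)" using E1_i1[OF i] y(2) by (cases y) auto
    then have ?thesis using y(3) i cb by (auto simp: Ys_def) }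
  moreover { assume "x = (i, 2) \<or> x = (i, 3)"
    then have "y = (i, 1)" using E1_i2[OF i] E1_i3[OF i] y(2) by (cases y) auto
    then have ?thesis by (simp add: Ys_def) }
  ultimately show ?thesis using x unfolding Ys_def by blast
qed

lemma reachXp:
  assumes i: "1 \<le> i" "i \<le> d" and pair: "{\<tau> w, c} = {B, C (bl i)}" and r: "kempe_reach V E \<tau> c w root"
    and z: "z \<in> Xp i"
  shows "kempe_reach V E \<tau> c w z"
proof -
  have p: "1 \<le> pt i" "pt i \<le> d" using ptr[OF i] by auto
  have bp: "bl (pt i) = bl i" using bl_pt[OF i(1)] .
  have cb: "C (bl i) \<noteq> B" using Cb[OF i] by simp
  have u: "kempe_reach V E \<tau> c w (a, 1)" if a: "1 \<le> a" "a \<le> d" "bl a = bl i" for a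
  proof (rule kempe_reach.step[OF r])
    show "(a, 1) \<in> V" using a by (simp add: V_eq)
    show "E root (a, 1)" using a E1_root by blast
    show "\<tau> (a, 1) \<in> {\<tau> w, c}" unfolding pair using a by simp
    show "\<tau> (a, 1) \<noteq> \<tau> root" using a cb by simp
  qed
  show ?thesis using z r u[OF i refl] u[OF p bp] unfolding Xp_def by auto
qed

lemma kT1_root_C:
  assumes i: "1 \<le> i" "i \<le> d"
  shows "kempe V E \<tau> root (C (bl i)) = Xp i"
proof (rule kempe_eqI)
  show "root \<in> Xp i" by (simp add: Xp_def)
  show "C (bl i) \<noteq> \<tau> root" using Cb[OF i] by simp
next
  fix x y assume a: "x \<in> Xp i" "y \<in> V" "E x y" "\<tau> y \<in> {\<tau> root, C (bl i)}"
  then show "y \<in> Xp i" using Xp_closed[OF i a(1-3)] by simp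
next
  fix y assume y: "y \<in> Xp i"
  have r: "kempe_reach V E \<tau> (C (bl i)) root root" by (rule kempe_reach.base) (simp add: V_eq)
  show "kempe_reach V E \<tau> (C (bl i)) root y" by (rule reachXp[OF i _ r y]) simp
qed

lemma kT1_root_other:
  assumes "c \<noteq> B" "\<And>j. 1 \<le> j \<Longrightarrow> j \<le> d div 2 \<Longrightarrow> c \<noteq> C j"
  shows "kempe V E \<tau> root c = {root}"
proof (rule kempe_single)
  fix y assume "y \<in> V" "E root y"
  then obtain a where a: "1 \<le> a" "a \<le> d" "y = (a, 1)" using nbr_root1 by blast
  then show "\<tau> y \<noteq> c" using assms(2) blr[OF a(1,2)] by auto
qed (use assms in \<open>auto simp: V_eq\<close>)

lemma kT1_a1_B:
  assumes i: "1 \<le> i" "i \<le> d"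
  shows "kempe V E \<tau> (i, 1) B = Xp i"
proof (rule kempe_eqI)
  show "(i, 1) \<in> Xp i" by (simp add: Xp_def)
  show "B \<noteq> \<tau> (i, 1)" using Cb[OF i] i by simp
next
  fix x y assume a: "x \<in> Xp i" "y \<in> V" "E x y" "\<tau> y \<in> {\<tau> (i, 1), B}"
  then show "y \<in> Xp i" using Xp_closed[OF i a(1-3)] i by auto
next
  fix y assume y: "y \<in> Xp i"
  have r0: "kempe_reach V E \<tau> B (i, 1) (i, 1)" by (rule kempe_reach.base) (use i in \<open>simp add: V_eq\<close>)
  have rr: "kempe_reach V E \<tau> B (i, 1) root"
  proof (rule kempe_reach.step[OF r0])
    show "E (i, 1) root" using E1_i1[OF i] by simp
    show "\<tau> root \<noteq> \<tau> (i, 1)" using i Cb[OF i] by simp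
  qed (simp_all add: V_eq)
  have pr: "{\<tau> (i, 1), B} = {B, C (bl i)}" using i by (simp add: insert_commute)
  show "kempe_reach V E \<tau> B (i, 1) y" by (rule reachXp[OF i pr rr y])
qed

lemma kT1_a1_A:
  assumes i: "1 \<le> i" "i \<le> d"
  shows "kempe V E \<tau> (i, 1) A = Ys i"
proof (rule kempe_eqI)
  show "(i, 1) \<in> Ys i" by (simp add: Ys_def)
  show "A \<noteq> \<tau> (i, 1)" using Cb[OF i] i by simp
next
  fix x y assume a: "x \<in> Ys i" "y \<in> V" "E x y" "\<tau> y \<in> {\<tau> (i, 1), A}"
  then show "y \<in> Ys i" using Ys_closed[OF i a(1-3)] i by auto
next
  fix y assume y: "y \<in> Ys i"
  have r0: "kempe_reach V E \<tau> A (i, 1) (i, 1)" by (rule kempe_reach.base) (use i in \<open>simp add: V_eq\<close>)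
  have rt: "kempe_reach V E \<tau> A (i, 1) (i, t)" if t: "t = 2 \<or> t = 3" for t
  proof (rule kempe_reach.step[OF r0])
    show "E (i, 1) (i, t)" using E1_i1[OF i] t by auto
    show "\<tau> (i, t) \<noteq> \<tau> (i, 1)" using i t Cb[OF i] by auto
    show "(i, t) \<in> V" using i t by (auto simp: V_eq)
    show "\<tau> (i, t) \<in> {\<tau> (i, 1), A}" using i t by auto
  qed
  show "kempe_reach V E \<tau> A (i, 1) y" using y r0 rt unfolding Ys_def by auto
qed

lemma kT1_a1_other:
  assumes i: "1 \<le> i" "i \<le> d" and c: "c \<noteq> A" "c \<noteq> B" "c \<noteq> C (bl i)"
  shows "kempe V E \<tau> (i, 1) c = {(i, 1)}"
proof (rule kempe_single)
  fix y assume "y \<in> V" "E (i, 1) y"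
  then have "y = root \<or> y = (i, 2) \<or> y = (i, 3)" using E1_i1[OF i] by (cases y) auto
  then show "\<tau> y \<noteq> c" using c i by auto
qed (use i c in \<open>auto simp: V_eq\<close>)

lemma kT1_at_C:
  assumes i: "1 \<le> i" "i \<le> d" and t: "t = 2 \<or> t = 3"
  shows "kempe V E \<tau> (i, t) (C (bl i)) = Ys i"
proof (rule kempe_eqI)
  show "(i, t) \<in> Ys i" using t by (auto simp: Ys_def)
  show "C (bl i) \<noteq> \<tau> (i, t)" using Cb[OF i] i t by auto
next
  fix x y assume a: "x \<in> Ys i" "y \<in> V" "E x y" "\<tau> y \<in> {\<tau> (i, t), C (bl i)}"
  then show "y \<in> Ys i" using Ys_closed[OF i a(1-3)] i t by auto
next
  fix y assume y: "y \<in> Ys i"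
  have r0: "kempe_reach V E \<tau> (C (bl i)) (i, t) (i, t)" by (rule kempe_reach.base) (use i t in \<open>auto simp: V_eq\<close>)
  have r1: "kempe_reach V E \<tau> (C (bl i)) (i, t) (i, 1)"
  proof (rule kempe_reach.step[OF r0])
    show "E (i, t) (i, 1)" using t E1_i2[OF i] E1_i3[OF i] by auto
    show "\<tau> (i, 1) \<noteq> \<tau> (i, t)" using t i Cb[OF i] by auto
    show "(i, 1) \<in> V" using i by (simp add: V_eq)
    show "\<tau> (i, 1) \<in> {\<tau> (i, t), C (bl i)}" using i by simp
  qed
  have rs: "kempe_reach V E \<tau> (C (bl i)) (i, t) (i, s)" if s: "s = 2 \<or> s = 3" for s
  proof (rule kempe_reach.step[OF r1])
    show "E (i, 1) (i, s)" using E1_i1[OF i] s by auto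
    show "\<tau> (i, s) \<noteq> \<tau> (i, 1)" using i s Cb[OF i] by auto
    show "(i, s) \<in> V" using i s by (auto simp: V_eq)
    show "\<tau> (i, s) \<in> {\<tau> (i, t), C (bl i)}" using i s t by auto
  qed
  show "kempe_reach V E \<tau> (C (bl i)) (i, t) y" using y r1 rs unfolding Ys_def by auto
qed

lemma kT1_at_other:
  assumes i: "1 \<le> i" "i \<le> d" and t: "t = 2 \<or> t = 3" and c: "c \<noteq> A" "c \<noteq> C (bl i)"
  shows "kempe V E \<tau> (i, t) c = {(i, t)}"
proof (rule kempe_single)
  fix y assume "y \<in> V" "E (i, t) y"
  then have "y = (i, 1)" using E1_i2[OF i] E1_i3[OF i] t by (cases y) auto
  then show "\<tau> y \<noteq> c" using c i by auto
qed (use i c t in \<open>auto simp: V_eq\<close>)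


lemma oth_gen:
  assumes S: "S \<subseteq> Xs i" and a: "1 \<le> a" "a \<noteq> i" "a \<noteq> pt i" and b: "base y a"
  shows "base (flip_set y S e c) a"
proof -
  have "(a, t) \<notin> S" for t using S a unfolding Xs_def root_def by auto
  then show ?thesis using b unfolding base_def flip_set_def by simp
qed

lemma sub_Xs: "Xp i \<subseteq> Xs i" "Ys i \<subseteq> Xs i" "{root} \<subseteq> Xs i" "t \<in> {1, 2, 3} \<Longrightarrow> {(i, t)} \<subseteq> Xs i"
  unfolding Xs_def Xp_def Ys_def by auto

lemma hflip:
  assumes i: "1 \<le> i" "i \<le> d" and S: "S \<subseteq> Xs i" and y: "y = \<sigma> \<or> y = \<tau>"
  shows "h (flip_set y S e c) = of_bool (flip_set y S e c root = A) + F1 B (C (bl i)) (flip_set y S e c) i (pt i)"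
proof (rule h_blk[OF i])
  fix a assume a: "1 \<le> a" "a \<le> d" "a \<noteq> i" "a \<noteq> pt i"
  have "base y a" using y base_sigma[OF a(1,2)] base_tau[OF a(1,2)] by auto
  then show "base (flip_set y S e c) a" by (rule oth_gen[OF S a(1,3,4)])
qed

lemma facts_i:
  assumes i: "1 \<le> i" "i \<le> d"
  shows "1 \<le> pt i" "pt i \<le> d" "pt i \<noteq> i" "i \<noteq> pt i" "bl (pt i) = bl i"
    "C (bl i) \<noteq> A" "C (bl i) \<noteq> B" "A \<noteq> C (bl i)" "B \<noteq> C (bl i)" "A \<noteq> B" "B \<noteq> A"
  using ptr[OF i] pt_neq[OF i(1)] pt_neq'[OF i(1)] bl_pt[OF i(1)] Cb[OF i] AB by auto

lemma tmS1_X: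
  assumes i: "1 \<le> i" "i \<le> d" and e: "(e = A \<and> c = C (bl i)) \<or> (e = C (bl i) \<and> c = A)"
  shows "h (flip_set \<sigma> (Xs i) e c) = 1"
proof -
  note f = facts_i[OF i]
  have "h (flip_set \<sigma> (Xs i) e c) = of_bool (flip_set \<sigma> (Xs i) e c root = A) + F1 B (C (bl i)) (flip_set \<sigma> (Xs i) e c) i (pt i)"
    by (rule hflip[OF i]) auto
  also have "\<dots> = 1"
  proof -
    let ?x = "flip_set \<sigma> (Xs i) e c"
    have m: "root \<in> Xs i" "(i, Suc 0) \<in> Xs i" "(i, 2) \<in> Xs i" "(i, 3) \<in> Xs i"
      "(pt i, Suc 0) \<in> Xs i" "(pt i, 2) \<in> Xs i" "(pt i, 3) \<in> Xs i" unfolding Xs_def by auto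
    have sv: "\<sigma> root = A" "\<sigma> (i, Suc 0) = C (bl i)" "\<sigma> (pt i, Suc 0) = C (bl i)"
      "\<sigma> (i, 2) = A" "\<sigma> (i, 3) = A" "\<sigma> (pt i, 2) = A" "\<sigma> (pt i, 3) = A"
      using i f by auto
    have v: "?x root = C (bl i)" "?x (i, Suc 0) = A" "?x (pt i, Suc 0) = A"
      "?x (i, 2) = C (bl i)" "?x (i, 3) = C (bl i)" "?x (pt i, 2) = C (bl i)" "?x (pt i, 3) = C (bl i)"
      using e f unfolding flip_set_def by (auto simp: m sv)
    show ?thesis unfolding F1_def Gb_def Mc_def using f by (simp add: v)
  qed
  finally show ?thesis .
qed


lemma flip_single: "flip_set y {w} (y w) c = y(w := c)"
  by (auto simp: flip_set_def)

lemma hsingle: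
  assumes i: "1 \<le> i" "i \<le> d" and t: "t \<in> {1, 2, 3}" and y: "y = \<sigma> \<or> y = \<tau>"
  shows "h (y((i, t) := c)) = of_bool (y root = A) + F1 B (C (bl i)) (y((i, t) := c)) i (pt i)"
proof -
  have eq: "flip_set y {(i, t)} (y (i, t)) c = y((i, t) := c)" by (rule flip_single)
  have "h (flip_set y {(i, t)} (y (i, t)) c) = of_bool (flip_set y {(i, t)} (y (i, t)) c root = A) + F1 B (C (bl i)) (flip_set y {(i, t)} (y (i, t)) c) i (pt i)"
    by (rule hflip[OF i sub_Xs(4)[OF t] y])
  then show ?thesis unfolding eq using i by (simp add: root_def)
qed

lemma hS_B: assumes i: "1 \<le> i" "i \<le> d" shows "h (\<sigma>((i, 1) := B)) = 2"
proof -
  note f = facts_i[OF i]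
  have "h (\<sigma>((i, 1) := B)) = of_bool (\<sigma> root = A) + F1 B (C (bl i)) (\<sigma>((i, 1) := B)) i (pt i)"
    by (rule hsingle[OF i]) auto
  also have "\<dots> = 2" unfolding F1_def Gb_def Mc_def using f i by simp
  finally show ?thesis .
qed

lemma hS_u_other: assumes i: "1 \<le> i" "i \<le> d" and c: "c \<noteq> B"
  shows "h (\<sigma>((i, 1) := c)) = 1"
proof -
  note f = facts_i[OF i]
  have "h (\<sigma>((i, 1) := c)) = of_bool (\<sigma> root = A) + F1 B (C (bl i)) (\<sigma>((i, 1) := c)) i (pt i)"
    by (rule hsingle[OF i]) auto
  also have "\<dots> = 1" unfolding F1_def Gb_def Mc_def using f i c by simp
  finally show ?thesis .
qed

lemma hS_w_other: assumes i: "1 \<le> i" "i \<le> d" and t: "t = 2 \<or> t = 3" and c: "c \<noteq> C (bl i)"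
  shows "h (\<sigma>((i, t) := c)) = 1"
proof -
  note f = facts_i[OF i]
  have "h (\<sigma>((i, t) := c)) = of_bool (\<sigma> root = A) + F1 B (C (bl i)) (\<sigma>((i, t) := c)) i (pt i)"
    by (rule hsingle[OF i]) (use t in auto)
  also have "\<dots> = 1" unfolding F1_def Gb_def Mc_def using f i c t by auto
  finally show ?thesis .
qed

lemma hT_u_other: assumes i: "1 \<le> i" "i \<le> d" and c: "c \<noteq> B"
  shows "h (\<tau>((i, 1) := c)) = 0"
proof -
  note f = facts_i[OF i]
  have "h (\<tau>((i, 1) := c)) = of_bool (\<tau> root = A) + F1 B (C (bl i)) (\<tau>((i, 1) := c)) i (pt i)"
    by (rule hsingle[OF i]) auto
  also have "\<dots> = 0" unfolding F1_def Gb_def Mc_def using f i c by simp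
  finally show ?thesis .
qed

lemma hT_w_other: assumes i: "1 \<le> i" "i \<le> d" and t: "t = 2 \<or> t = 3" and c: "c \<noteq> C (bl i)"
  shows "h (\<tau>((i, t) := c)) = 0"
proof -
  note f = facts_i[OF i]
  have "h (\<tau>((i, t) := c)) = of_bool (\<tau> root = A) + F1 B (C (bl i)) (\<tau>((i, t) := c)) i (pt i)"
    by (rule hsingle[OF i]) (use t in auto)
  also have "\<dots> = 0" unfolding F1_def Gb_def Mc_def using f i c t by auto
  finally show ?thesis .
qed

lemma h_root_upd:
  assumes y: "y = \<sigma> \<or> y = \<tau>"
  shows "h (y(root := c)) = of_bool (c = A)"
proof -
  have "h (y(root := c)) = of_bool ((y(root := c)) root = A)"
  proof (rule h_base1)
    fix a assume a: "1 \<le> a" "a \<le> d"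
    have "base y a" using y base_sigma[OF a] base_tau[OF a] by auto
    then show "base (y(root := c)) a" using a unfolding base_def by (simp add: root_def)
  qed
  then show ?thesis by simp
qed

lemma hT_Xp:
  assumes i: "1 \<le> i" "i \<le> d" and e: "(e = B \<and> c = C (bl i)) \<or> (e = C (bl i) \<and> c = B)"
  shows "h (flip_set \<tau> (Xp i) e c) = 0"
proof -
  note f = facts_i[OF i]
  have "h (flip_set \<tau> (Xp i) e c) = of_bool (flip_set \<tau> (Xp i) e c root = A) + F1 B (C (bl i)) (flip_set \<tau> (Xp i) e c) i (pt i)"
    by (rule hflip[OF i sub_Xs(1)]) auto
  also have "\<dots> = 0"
  proof -
    let ?x = "flip_set \<tau> (Xp i) e c"
    have m: "root \<in> Xp i" "(i, Suc 0) \<in> Xp i" "(i, 2) \<notin> Xp i" "(i, 3) \<notin> Xp i"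
      "(pt i, Suc 0) \<in> Xp i" "(pt i, 2) \<notin> Xp i" "(pt i, 3) \<notin> Xp i" using f unfolding Xp_def root_def by auto
    have sv: "\<tau> root = B" "\<tau> (i, Suc 0) = C (bl i)" "\<tau> (pt i, Suc 0) = C (bl i)"
      "\<tau> (i, 2) = A" "\<tau> (i, 3) = A" "\<tau> (pt i, 2) = A" "\<tau> (pt i, 3) = A"
      using i f by auto
    have v: "?x root = C (bl i)" "?x (i, Suc 0) = B" "?x (pt i, Suc 0) = B"
      "?x (i, 2) = A" "?x (i, 3) = A" "?x (pt i, 2) = A" "?x (pt i, 3) = A"
      using e f unfolding flip_set_def by (auto simp: m sv)
    show ?thesis unfolding F1_def Gb_def Mc_def using f by (simp add: v)
  qed
  finally show ?thesis .
qed

lemma hT_Ys: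
  assumes i: "1 \<le> i" "i \<le> d" and e: "(e = A \<and> c = C (bl i)) \<or> (e = C (bl i) \<and> c = A)"
  shows "h (flip_set \<tau> (Ys i) e c) = -2"
proof -
  note f = facts_i[OF i]
  have "h (flip_set \<tau> (Ys i) e c) = of_bool (flip_set \<tau> (Ys i) e c root = A) + F1 B (C (bl i)) (flip_set \<tau> (Ys i) e c) i (pt i)"
    by (rule hflip[OF i sub_Xs(2)]) auto
  also have "\<dots> = -2"
  proof -
    let ?x = "flip_set \<tau> (Ys i) e c"
    have m: "root \<notin> Ys i" "(i, Suc 0) \<in> Ys i" "(i, 2) \<in> Ys i" "(i, 3) \<in> Ys i"
      "(pt i, Suc 0) \<notin> Ys i" "(pt i, 2) \<notin> Ys i" "(pt i, 3) \<notin> Ys i" using f i unfolding Ys_def root_def by auto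
    have sv: "\<tau> root = B" "\<tau> (i, Suc 0) = C (bl i)" "\<tau> (pt i, Suc 0) = C (bl i)"
      "\<tau> (i, 2) = A" "\<tau> (i, 3) = A" "\<tau> (pt i, 2) = A" "\<tau> (pt i, 3) = A"
      using i f by auto
    have v: "?x root = B" "?x (i, Suc 0) = A" "?x (pt i, Suc 0) = C (bl i)"
      "?x (i, 2) = C (bl i)" "?x (i, 3) = C (bl i)" "?x (pt i, 2) = A" "?x (pt i, 3) = A"
      using e f unfolding flip_set_def by (auto simp: m sv)
    show ?thesis unfolding F1_def Gb_def Mc_def using f by (simp add: v)
  qed
  finally show ?thesis .
qed


lemma tmS1_root_C: assumes i: "1 \<le> i" "i \<le> d" shows "tm V E p \<sigma> h root (C (bl i)) = 0"
proof -
  have "h (flip_set \<sigma> (Xs i) (\<sigma> root) (C (bl i))) = 1" by (rule tmS1_X[OF i]) simp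
  then show ?thesis unfolding tm_def kS1_root_C[OF i] h_sigma by simp
qed

lemma tmS1_root_other: assumes "c \<noteq> A" "\<And>j. 1 \<le> j \<Longrightarrow> j \<le> d div 2 \<Longrightarrow> c \<noteq> C j"
  shows "tm V E p \<sigma> h root c = - p 1"
proof -
  have k: "kempe V E \<sigma> root c = {root}" by (rule kS1_root_other) (use assms in auto)
  have "h (\<sigma>(root := c)) = 0" using h_root_upd[of "\<sigma>" c] assms by simp
  then show ?thesis unfolding tm_def k flip_single h_sigma by simp
qed

lemma tmS1_a1_A: assumes i: "1 \<le> i" "i \<le> d" shows "tm V E p \<sigma> h (i, 1) A = 0"
proof -
  have "h (flip_set \<sigma> (Xs i) (\<sigma> (i, 1)) A) = 1" by (rule tmS1_X[OF i]) (use i in simp)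
  then show ?thesis unfolding tm_def kS1_a1_A[OF i] h_sigma by simp
qed

lemma tmS1_a1_B: assumes i: "1 \<le> i" "i \<le> d" shows "tm V E p \<sigma> h (i, 1) B = p 1"
proof -
  note f = facts_i[OF i]
  have k: "kempe V E \<sigma> (i, 1) B = {(i, 1)}" by (rule kS1_a1_other[OF i]) (use f in auto)
  show ?thesis unfolding tm_def k flip_single h_sigma hS_B[OF i] by simp
qed

lemma tmS1_a1_other: assumes i: "1 \<le> i" "i \<le> d" and c: "c \<noteq> A" "c \<noteq> B" "c \<noteq> C (bl i)"
  shows "tm V E p \<sigma> h (i, 1) c = 0"
  unfolding tm_def kS1_a1_other[OF i c(1,3)] flip_single h_sigma hS_u_other[OF i c(2)] by simp

lemma tmS1_at_C: assumes i: "1 \<le> i" "i \<le> d" and t: "t = 2 \<or> t = 3" shows "tm V E p \<sigma> h (i, t) (C (bl i)) = 0"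
proof -
  have "h (flip_set \<sigma> (Xs i) (\<sigma> (i, t)) (C (bl i))) = 1" by (rule tmS1_X[OF i]) (use i t in auto)
  then show ?thesis unfolding tm_def kS1_at_C[OF i t] h_sigma by simp
qed

lemma tmS1_at_other: assumes i: "1 \<le> i" "i \<le> d" and t: "t = 2 \<or> t = 3" and c: "c \<noteq> A" "c \<noteq> C (bl i)"
  shows "tm V E p \<sigma> h (i, t) c = 0"
  unfolding tm_def kS1_at_other[OF i t c] flip_single h_sigma hS_w_other[OF i t c(2)] by simp

lemma tmT1_root_C: assumes i: "1 \<le> i" "i \<le> d" shows "tm V E p \<tau> h root (C (bl i)) = 0"
proof -
  have "h (flip_set \<tau> (Xp i) (\<tau> root) (C (bl i))) = 0" by (rule hT_Xp[OF i]) simp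
  then show ?thesis unfolding tm_def kT1_root_C[OF i] h_tau by simp
qed

lemma tmT1_root_A: "tm V E p \<tau> h root A = p 1"
proof -
  have k: "kempe V E \<tau> root A = {root}" by (rule kT1_root_other) (use AB in simp, metis Cf)
  have "h (\<tau>(root := A)) = 1" using h_root_upd[of "\<tau>" A] by simp
  then show ?thesis unfolding tm_def k flip_single h_tau by simp
qed

lemma tmT1_root_other: assumes "c \<noteq> A" "c \<noteq> B" "\<And>j. 1 \<le> j \<Longrightarrow> j \<le> d div 2 \<Longrightarrow> c \<noteq> C j"
  shows "tm V E p \<tau> h root c = 0"
proof -
  have k: "kempe V E \<tau> root c = {root}" by (rule kT1_root_other) (use assms in auto)
  have "h (\<tau>(root := c)) = 0" using h_root_upd[of "\<tau>" c] assms by simp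
  then show ?thesis unfolding tm_def k flip_single h_tau by simp
qed

lemma tmT1_a1_B: assumes i: "1 \<le> i" "i \<le> d" shows "tm V E p \<tau> h (i, 1) B = 0"
proof -
  have "h (flip_set \<tau> (Xp i) (\<tau> (i, 1)) B) = 0" by (rule hT_Xp[OF i]) (use i in simp)
  then show ?thesis unfolding tm_def kT1_a1_B[OF i] h_tau by simp
qed

lemma card_Ys: "card (Ys i) = 3" unfolding Ys_def by simp

lemma tmT1_a1_A: assumes i: "1 \<le> i" "i \<le> d" shows "tm V E p \<tau> h (i, 1) A = - 2 * p 3 / 3"
proof -
  have "h (flip_set \<tau> (Ys i) (\<tau> (i, 1)) A) = -2" by (rule hT_Ys[OF i]) (use i in simp)
  then show ?thesis unfolding tm_def kT1_a1_A[OF i] h_tau card_Ys by simp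
qed

lemma tmT1_a1_other: assumes i: "1 \<le> i" "i \<le> d" and c: "c \<noteq> A" "c \<noteq> B" "c \<noteq> C (bl i)"
  shows "tm V E p \<tau> h (i, 1) c = 0"
  unfolding tm_def kT1_a1_other[OF i c] flip_single h_tau hT_u_other[OF i c(2)] by simp

lemma tmT1_at_C: assumes i: "1 \<le> i" "i \<le> d" and t: "t = 2 \<or> t = 3" shows "tm V E p \<tau> h (i, t) (C (bl i)) = - 2 * p 3 / 3"
proof -
  have "h (flip_set \<tau> (Ys i) (\<tau> (i, t)) (C (bl i))) = -2" by (rule hT_Ys[OF i]) (use i t in auto)
  then show ?thesis unfolding tm_def kT1_at_C[OF i t] h_tau card_Ys by simp
qed

lemma tmT1_at_other: assumes i: "1 \<le> i" "i \<le> d" and t: "t = 2 \<or> t = 3" and c: "c \<noteq> A" "c \<noteq> C (bl i)"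
  shows "tm V E p \<tau> h (i, t) c = 0"
  unfolding tm_def kT1_at_other[OF i t c] flip_single h_tau hT_w_other[OF i t c(2)] by simp

end


lemma sum_pairs:
  fixes m :: nat and f :: "nat \<Rightarrow> 'a::comm_monoid_add"
  shows "(\<Sum>i\<in>{1..2*m}. f i) = (\<Sum>j\<in>{1..m}. f (2*j-1) + f (2*j))"
proof (induction m)
  case 0 then show ?case by simp
next
  case (Suc m)
  have "{1..2 * Suc m} = insert (2*m+2) (insert (2*m+1) {1..2*m})" by auto
  then have "(\<Sum>i\<in>{1..2*Suc m}. f i) = f (2*m+2) + f (2*m+1) + (\<Sum>i\<in>{1..2*m}. f i)" by (simp add: add.assoc)
  moreover have "(\<Sum>j\<in>{1..Suc m}. f (2*j-1) + f (2*j)) = (\<Sum>j\<in>{1..m}. f (2*j-1) + f (2*j)) + (f (2*m+1) + f (2*m+2))"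
    by (simp add: sum.cl_ivl_Suc)
  ultimately show ?case using Suc by (simp add: ac_simps)
qed

lemma g_lip:
  fixes m n :: nat and e :: real
  assumes "0 \<le> e" "e \<le> 1"
  shows "(\<bar>real m - 2\<bar> + e * of_bool (2 \<le> m)) - (\<bar>real n - 2\<bar> + e * of_bool (2 \<le> n)) \<le> \<bar>real m - real n\<bar>"
proof (cases "2 \<le> m"; cases "2 \<le> n")
  assume "2 \<le> m" "2 \<le> n" then show ?thesis by simp
next
  assume "2 \<le> m" "\<not> 2 \<le> n"
  then have "real n \<le> 1" "real m \<ge> 2" by auto
  then show ?thesis using assms by simp
next
  assume "\<not> 2 \<le> m" "2 \<le> n"
  then have "real m \<le> 1" "real n \<ge> 2" by auto
  then show ?thesis using assms by simp
next
  assume "\<not> 2 \<le> m" "\<not> 2 \<le> n"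
  then have "real m \<le> 1" "real n \<le> 1" by auto
  then show ?thesis by simp
qed

definition Dd :: "(nat \<times> nat \<Rightarrow> nat) \<Rightarrow> (nat \<times> nat \<Rightarrow> nat) \<Rightarrow> nat \<Rightarrow> real" where
  "Dd x y a = of_bool (x (a, 1) \<noteq> y (a, 1)) + of_bool (x (a, 2) \<noteq> y (a, 2)) + of_bool (x (a, 3) \<noteq> y (a, 3))"

lemma ob_lip: "of_bool (x w = c) - of_bool (y w = c) \<le> (of_bool (x w \<noteq> y w) :: real)"
  "of_bool (y w = c) - of_bool (x w = c) \<le> (of_bool (x w \<noteq> y w) :: real)"
  by auto

lemma Mc_lip: "\<bar>real (Mc c x a b) - real (Mc c y a b)\<bar> \<le>
   of_bool (x (a, 2) \<noteq> y (a, 2)) + of_bool (x (a, 3) \<noteq> y (a, 3)) + of_bool (x (b, 2) \<noteq> y (b, 2)) + of_bool (x (b, 3) \<noteq> y (b, 3))"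
  unfolding Mc_def using ob_lip[of x "(a,2)" c y] ob_lip[of x "(a,3)" c y] ob_lip[of x "(b,2)" c y] ob_lip[of x "(b,3)" c y]
  by (simp add: abs_le_iff)

lemma xor_lip: "of_bool ((x (a, 1) = B) \<noteq> (x (b, 1) = B)) - of_bool ((y (a, 1) = B) \<noteq> (y (b, 1) = B))
   \<le> (of_bool (x (a, 1) \<noteq> y (a, 1)) + of_bool (x (b, 1) \<noteq> y (b, 1)) :: real)"
  by auto

lemma Gb_lip: "Gb B c x a b - Gb B c y a b \<le> Dd x y a + Dd x y b"
proof -
  have "\<bar>real (Mc c x a b) - 2\<bar> - \<bar>real (Mc c y a b) - 2\<bar> \<le> \<bar>real (Mc c x a b) - real (Mc c y a b)\<bar>" by simp
  then show ?thesis unfolding Gb_def Dd_def using Mc_lip[of c x a b y] xor_lip[of x a B b y] by linarith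
qed

lemma F1_lip: assumes r: "x root = y root" shows "F1 B c x a b - F1 B c y a b \<le> Dd x y a + Dd x y b"
proof -
  have e: "0 \<le> (of_bool (y root = c) :: real)" "(of_bool (y root = c) :: real) \<le> 1" by auto
  have "(\<bar>real (Mc c x a b) - 2\<bar> + of_bool (y root = c) * of_bool (2 \<le> Mc c x a b)) -
        (\<bar>real (Mc c y a b) - 2\<bar> + of_bool (y root = c) * of_bool (2 \<le> Mc c y a b)) \<le> \<bar>real (Mc c x a b) - real (Mc c y a b)\<bar>"
    by (rule g_lip[OF e])
  then show ?thesis unfolding F1_def Gb_def Dd_def r using Mc_lip[of c x a b y] xor_lip[of x a B b y] by linarith
qed

context cfg1 begin

lemma ham_V1: "real (hamming V x y) = of_bool (x root \<noteq> y root) + (\<Sum>j\<in>{1..d div 2}. Dd x y (2*j-1) + Dd x y (2*j))"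
proof -
  have "real (hamming V x y) = of_bool (x root \<noteq> y root) + (\<Sum>i\<in>{1..d}. Dd x y i)"
    unfolding V_eq hamming_sum[OF Vpath_finite] sum_Vpath sum_123 Dd_def by simp
  also have "d = 2 * (d div 2)" using ev by simp
  then have "(\<Sum>i\<in>{1..d}. Dd x y i) = (\<Sum>j\<in>{1..d div 2}. Dd x y (2*j-1) + Dd x y (2*j))"
    by (metis sum_pairs)
  finally show ?thesis .
qed

definition T1 :: "(nat \<times> nat \<Rightarrow> nat) \<Rightarrow> real" where
  "T1 x = of_bool (x root = A) + (\<Sum>j\<in>{1..d div 2}. of_bool (x root = C j) * of_bool (2 \<le> Mc (C j) x (2*j-1) (2*j)))"

lemma T1_bounds: "0 \<le> T1 x" "T1 x \<le> 1"
proof -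
  show "0 \<le> T1 x" unfolding T1_def by (intro add_nonneg_nonneg sum_nonneg) auto
  show "T1 x \<le> 1"
  proof (cases "x root = A")
    case True
    have "(\<Sum>j\<in>{1..d div 2}. of_bool (x root = C j) * of_bool (2 \<le> Mc (C j) x (2*j-1) (2*j))) = (0::real)"
    proof (rule sum.neutral, rule ballI)
      fix j assume "j \<in> {1..d div 2}"
      then have "C j \<noteq> A" using Cf by auto
      then show "of_bool (x root = C j) * of_bool (2 \<le> Mc (C j) x (2*j-1) (2*j)) = (0::real)" using True by simp
    qed
    then show ?thesis using True unfolding T1_def by simp
  next
    case False
    have "(\<Sum>j\<in>{1..d div 2}. of_bool (x root = C j) * of_bool (2 \<le> Mc (C j) x (2*j-1) (2*j))) \<le> (1::real)"
      by (rule sum_inj_le1[OF injC]) auto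
    then show ?thesis using False unfolding T1_def by simp
  qed
qed

lemma h1_split: "h x = T1 x + (\<Sum>j\<in>{1..d div 2}. Gb B (C j) x (2*j-1) (2*j))"
  unfolding h1_def T1_def F1_def sum.distrib by simp

lemma h1_lip: "h x - h y \<le> real (hamming V x y)"
proof (cases "x root = y root")
  case True
  have "h x - h y = (\<Sum>j\<in>{1..d div 2}. F1 B (C j) x (2*j-1) (2*j) - F1 B (C j) y (2*j-1) (2*j))"
    unfolding h1_def using True by (simp add: sum_subtractf)
  also have "\<dots> \<le> (\<Sum>j\<in>{1..d div 2}. Dd x y (2*j-1) + Dd x y (2*j))"
    by (rule sum_mono) (rule F1_lip[where x=x and y=y, OF True])
  also have "\<dots> \<le> real (hamming V x y)" unfolding ham_V1 by simp
  finally show ?thesis .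
next
  case False
  have "h x - h y \<le> 1 + (\<Sum>j\<in>{1..d div 2}. Gb B (C j) x (2*j-1) (2*j) - Gb B (C j) y (2*j-1) (2*j))"
    unfolding h1_split[of x] h1_split[of y] sum_subtractf using T1_bounds[of x] T1_bounds[of y] by linarith
  also have "\<dots> \<le> 1 + (\<Sum>j\<in>{1..d div 2}. Dd x y (2*j-1) + Dd x y (2*j))"
    by (intro add_left_mono sum_mono Gb_lip)
  also have "\<dots> = real (hamming V x y)" unfolding ham_V1 using False by simp
  finally show ?thesis .
qed


lemma sum_V1: "(\<Sum>w\<in>V. f w) = f root + (\<Sum>i\<in>{1..d}. \<Sum>j\<in>{1..3}. f (i, j))"
  unfolding V_eq by (rule sum_Vpath)

lemma sum_sigma1:
  "(\<Sum>w\<in>V. \<Sum>c\<in>{0..<k}. tm V E p \<sigma> h w c) =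
     - p 1 + (real k - 2 - real (d div 2)) * (- p 1) + real d * p 1"
proof -
  have r: "(\<Sum>c\<in>{0..<k}. tm V E p \<sigma> h root c) = real (card {1..d div 2}) * 0 + (- p 1) + (real k - 2 - real (card {1..d div 2})) * (- p 1)"
  proof (rule sum_colors[OF injC])
    show "tm V E p \<sigma> h root A = 0" using tm_self[of V E p \<sigma> h root] by simp
    show "tm V E p \<sigma> h root B = - p 1" by (rule tmS1_root_other) (use AB in simp, metis Cf)
    show "tm V E p \<sigma> h root (C j) = 0" if j: "j \<in> {1..d div 2}" for j
    proof -
      have i: "1 \<le> 2 * j - 1" "2 * j - 1 \<le> d" using j ev by auto
      have "bl (2 * j - 1) = j" using bl_odd j by auto
      then show ?thesis using tmS1_root_C[OF i] by simp
    qed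
    show "\<And>c. c < k \<Longrightarrow> c \<noteq> A \<Longrightarrow> c \<noteq> B \<Longrightarrow> c \<notin> C ` {1..d div 2} \<Longrightarrow> tm V E p \<sigma> h root c = - p 1"
      by (rule tmS1_root_other) auto
  qed (use AB Cf in auto)
  have b: "(\<Sum>t\<in>{1..3}. \<Sum>c\<in>{0..<k}. tm V E p \<sigma> h (i, t) c) = p 1" if i: "1 \<le> i" "i \<le> d" for i
  proof -
    note f = facts_i[OF i]
    have 1: "(\<Sum>c\<in>{0..<k}. tm V E p \<sigma> h (i, 1) c) = tm V E p \<sigma> h (i, 1) A + tm V E p \<sigma> h (i, 1) B"
    proof (rule sum_two)
      fix c assume "c < k" "c \<noteq> A" "c \<noteq> B"
      then show "tm V E p \<sigma> h (i, 1) c = 0"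
        using tmS1_a1_other[OF i] tm_self[of V E p \<sigma> h "(i, 1)"] i by (cases "c = C (bl i)") auto
    qed (use AB in auto)
    have w: "(\<Sum>c\<in>{0..<k}. tm V E p \<sigma> h (i, t) c) = 0" if t: "t = 2 \<or> t = 3" for t
    proof -
      have "(\<Sum>c\<in>{0..<k}. tm V E p \<sigma> h (i, t) c) = tm V E p \<sigma> h (i, t) (C (bl i)) + tm V E p \<sigma> h (i, t) A"
      proof (rule sum_two)
        fix c assume "c < k" "c \<noteq> C (bl i)" "c \<noteq> A"
        then show "tm V E p \<sigma> h (i, t) c = 0" using tmS1_at_other[OF i t] by auto
      qed (use AB Cb[OF i] in auto)
      moreover have "tm V E p \<sigma> h (i, t) A = 0" using tm_self[of V E p \<sigma> h "(i, t)"] i t by auto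
      ultimately show ?thesis using tmS1_at_C[OF i t] by simp
    qed
    show ?thesis unfolding sum_123 1 w[of 2, simplified] w[of 3, simplified] tmS1_a1_A[OF i] tmS1_a1_B[OF i] by simp
  qed
  have "(\<Sum>i\<in>{1..d}. \<Sum>t\<in>{1..3}. \<Sum>c\<in>{0..<k}. tm V E p \<sigma> h (i, t) c) = (\<Sum>i\<in>{1..d}. p 1)"
    by (rule sum.cong[OF refl], rule b) auto
  then show ?thesis unfolding sum_V1 r by simp
qed

lemma sum_tau1:
  "(\<Sum>w\<in>V. \<Sum>c\<in>{0..<k}. tm V E p \<tau> h w c) = p 1 + real d * (- 2 * p 3)"
proof -
  have r: "(\<Sum>c\<in>{0..<k}. tm V E p \<tau> h root c) = real (card {1..d div 2}) * 0 + p 1 + (real k - 2 - real (card {1..d div 2})) * 0"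
  proof (rule sum_colors[OF injC])
    show "tm V E p \<tau> h root B = 0" using tm_self[of V E p \<tau> h root] by simp
    show "tm V E p \<tau> h root A = p 1" by (rule tmT1_root_A)
    show "tm V E p \<tau> h root (C j) = 0" if j: "j \<in> {1..d div 2}" for j
    proof -
      have i: "1 \<le> 2 * j - 1" "2 * j - 1 \<le> d" using j ev by auto
      have "bl (2 * j - 1) = j" using bl_odd j by auto
      then show ?thesis using tmT1_root_C[OF i] by simp
    qed
    show "\<And>c. c < k \<Longrightarrow> c \<noteq> B \<Longrightarrow> c \<noteq> A \<Longrightarrow> c \<notin> C ` {1..d div 2} \<Longrightarrow> tm V E p \<tau> h root c = 0"
      by (rule tmT1_root_other) auto
  qed (use AB Cf in auto)
  have b: "(\<Sum>t\<in>{1..3}. \<Sum>c\<in>{0..<k}. tm V E p \<tau> h (i, t) c) = - 2 * p 3" if i: "1 \<le> i" "i \<le> d" for i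
  proof -
    note f = facts_i[OF i]
    have 1: "(\<Sum>c\<in>{0..<k}. tm V E p \<tau> h (i, 1) c) = tm V E p \<tau> h (i, 1) A + tm V E p \<tau> h (i, 1) B"
    proof (rule sum_two)
      fix c assume "c < k" "c \<noteq> A" "c \<noteq> B"
      then show "tm V E p \<tau> h (i, 1) c = 0"
        using tmT1_a1_other[OF i] tm_self[of V E p \<tau> h "(i, 1)"] i by (cases "c = C (bl i)") auto
    qed (use AB in auto)
    have w: "(\<Sum>c\<in>{0..<k}. tm V E p \<tau> h (i, t) c) = - 2 * p 3 / 3" if t: "t = 2 \<or> t = 3" for t
    proof -
      have "(\<Sum>c\<in>{0..<k}. tm V E p \<tau> h (i, t) c) = tm V E p \<tau> h (i, t) (C (bl i)) + tm V E p \<tau> h (i, t) A"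
      proof (rule sum_two)
        fix c assume "c < k" "c \<noteq> C (bl i)" "c \<noteq> A"
        then show "tm V E p \<tau> h (i, t) c = 0" using tmT1_at_other[OF i t] by auto
      qed (use AB Cb[OF i] in auto)
      moreover have "tm V E p \<tau> h (i, t) A = 0" using tm_self[of V E p \<tau> h "(i, t)"] i t by auto
      ultimately show ?thesis using tmT1_at_C[OF i t] by simp
    qed
    show ?thesis unfolding sum_123 1 w[of 2, simplified] w[of 3, simplified] tmT1_a1_A[OF i] tmT1_a1_B[OF i] by simp
  qed
  have "(\<Sum>i\<in>{1..d}. \<Sum>t\<in>{1..3}. \<Sum>c\<in>{0..<k}. tm V E p \<tau> h (i, t) c) = (\<Sum>i\<in>{1..d}. - 2 * p 3)"
    by (rule sum.cong[OF refl], rule b) auto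
  then show ?thesis unfolding sum_V1 r by simp
qed

lemma G1_result:
  assumes "contracting_coupling V E k p \<sigma> \<tau>" "\<forall>\<alpha>. 0 \<le> p \<alpha> \<and> p \<alpha> \<le> 1"
  shows "(real d + real (d div 2) - real k) * p 1 + 2 * real d * p 3 < 0"
proof -
  have "(\<Sum>w\<in>V. \<Sum>c\<in>{0..<k}. tm V E p \<sigma> h w c) - (\<Sum>w\<in>V. \<Sum>c\<in>{0..<k}. tm V E p \<tau> h w c) < 0"
  proof (rule contracting_imp[OF assms(1) _ _ _ assms(2) h1_lip])
    show "finite V" unfolding V_eq by (rule Vpath_finite)
    show "V \<noteq> {}" unfolding V_eq using root_in_Vpath by blast
  qed (use AB h_sigma h_tau in auto)
  then show ?thesis unfolding sum_sigma1 sum_tau1 by (simp add: algebra_simps)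
qed

end

theorem lemma3p5:
  fixes d k :: nat and a b :: "nat \<Rightarrow> nat" and c :: "nat \<Rightarrow> nat \<Rightarrow> nat"
  assumes "even d"
    and "real k < 11 / 6 * real d"
    and "valid_colors k (d div 2) (a 1) (b 1) (c 1)"
    and "\<forall>m\<in>{2, 3, 4}. valid_colors k d (a m) (b m) (c m)"
  shows "\<not> (\<exists>p :: nat \<Rightarrow> real. (\<forall>\<alpha>. 0 \<le> p \<alpha> \<and> p \<alpha> \<le> 1) \<and>
            contracting_coupling (V1 d) (E1 d) k p
              (col1 (a 1) (a 1) (c 1)) (col1 (b 1) (a 1) (c 1)) \<and>
            (\<forall>m\<in>{2, 3, 4}. contracting_coupling (Vpath d m) (Epath d m) k p
              (colpath (a m) (a m) (c m)) (colpath (b m) (a m) (c m))))"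
proof
  assume "\<exists>p :: nat \<Rightarrow> real. (\<forall>\<alpha>. 0 \<le> p \<alpha> \<and> p \<alpha> \<le> 1) \<and>
            contracting_coupling (V1 d) (E1 d) k p
              (col1 (a 1) (a 1) (c 1)) (col1 (b 1) (a 1) (c 1)) \<and>
            (\<forall>m\<in>{2, 3, 4}. contracting_coupling (Vpath d m) (Epath d m) k p
              (colpath (a m) (a m) (c m)) (colpath (b m) (a m) (c m)))"
  then obtain p :: "nat \<Rightarrow> real" where pb: "\<forall>\<alpha>. 0 \<le> p \<alpha> \<and> p \<alpha> \<le> 1"
    and c1: "contracting_coupling (V1 d) (E1 d) k p (col1 (a 1) (a 1) (c 1)) (col1 (b 1) (a 1) (c 1))"
    and cm: "\<forall>m\<in>{2, 3, 4}. contracting_coupling (Vpath d m) (Epath d m) k p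
              (colpath (a m) (a m) (c m)) (colpath (b m) (a m) (c m))"
    by blast
  have c2: "contracting_coupling (Vpath d 2) (Epath d 2) k p (colpath (a 2) (a 2) (c 2)) (colpath (b 2) (a 2) (c 2))"
    using cm by simp
  have v2: "valid_colors k d (a 2) (b 2) (c 2)" using assms(4) by simp
  interpret I2: cfg2 d k "a 2" "b 2" "c 2" using v2 by unfold_locales
  interpret I1: cfg1 d k "a 1" "b 1" "c 1" using assms(1,3) by unfold_locales
  have r2: "(2 * real d - real k) * p 1 - real d * p 3 < 0" by (rule I2.G2_result[OF c2 pb])
  have r1: "(real d + real (d div 2) - real k) * p 1 + 2 * real d * p 3 < 0" by (rule I1.G1_result[OF c1 pb])
  have dd: "real (d div 2) = real d / 2" using assms(1) by (auto elim!: evenE)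
  have p1: "0 \<le> p 1" using pb by simp
  have pos: "0 \<le> (11 / 2 * real d - 3 * real k) * p 1" using assms(2) p1 by (intro mult_nonneg_nonneg) auto
  define X where "X = (2 * real d - real k) * p 1 - real d * p 3"
  define Y where "Y = (real d + real (d div 2) - real k) * p 1 + 2 * real d * p 3"
  define Z where "Z = (11 / 2 * real d - 3 * real k) * p 1"
  have "Z = 2 * X + Y"
    unfolding X_def Y_def Z_def dd by (simp add: algebra_simps)
  moreover have "X < 0" "Y < 0" "0 \<le> Z" using r1 r2 pos unfolding X_def Y_def Z_def by auto
  ultimately show False by linarith
qed

end
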